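(* For any $\sigma\in S_n$ and $I,J\in\mathcal I_\lambda$, the Laurent polynomial $W_{\sigma,I}(z_J,z,h)$ is divisible by $E(z_J,h)$ in $\mathbb C[z_1^{\pm1},\dots,z_n^{\pm1},h^{\pm1}]$.
   Context: Fix $N,n$, $\lambda\in\mathbb Z_{\ge0}^N$ with $\sum\lambda_k=n$; $\lambda^{(k)}=\lambda_1+\dots+\lambda_k$, $\lambda^{\{1\}}=\lambda^{(1)}+\dots+\lambda^{(N-1)}$. $\mathcal I_\lambda$ = ordered partitions $I=(I_1,\dots,I_N)$ of $\{1,\dots,n\}$ with $|I_k|=\lambda_k$; write $I_1\cup\dots\cup I_k=\{i^{(k)}_1<\dots<i^{(k)}_{\lambda^{(k)}}\}$. For $\sigma\in S_n$, $\sigma(I)=(\sigma(I_1),\dots,\sigma(I_N))$. Weight functions: variables $t^{(k)}_a$ ($1\le k\le N-1$, $1\le a\le\lambda^{(k)}$), $z_1,\dots,z_n$, $h$; set $t^{(N)}_a=z_a$. Let $U_I=\prod_{k=1}^{N-1}\prod_{a=1}^{\lambda^{(k)}}\Big(\prod_{c\le\lambda^{(k+1)}:\,i^{(k+1)}_c<i^{(k)}_a}(1-ht^{(k+1)}_c/t^{(k)}_a)\prod_{c\le\lambda^{(k+1)}:\,i^{(k+1)}_c>i^{(k)}_a}(1-t^{(k+1)}_c/t^{(k)}_a)\prod_{b=a+1}^{\lambda^{(k)}}\frac{1-ht^{(k)}_b/t^{(k)}_a}{1-t^{(k)}_b/t^{(k)}_a}\Big)$ and $W_I=(1-h)^{\lambda^{\{1\}}}\mathrm{Sym}_{t^{(1)}}\cdots\mathrm{Sym}_{t^{(N-1)}}U_I$,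 where $\mathrm{Sym}_{t^{(k)}}f=\sum_{\pi\in S_{\lambda^{(k)}}}f|_{t^{(k)}_a\mapsto t^{(k)}_{\pi(a)}}$; $W_I$ is a Laurent polynomial in $t,z,h$. For $\sigma\in S_n$, $W_{\sigma,I}(t,z,h)=W_{\sigma^{-1}(I)}(t,z_{\sigma(1)},\dots,z_{\sigma(n)},h)$. For $J\in\mathcal I_\lambda$, $f(z_J,z,h)$ denotes the substitution $t^{(k)}_a=z_{j^{(k)}_a}$ where $J_1\cup\dots\cup J_k=\{j^{(k)}_1<\dots<j^{(k)}_{\lambda^{(k)}}\}$. $E(t,h)=\prod_{k=1}^{N-1}\prod_{a,b=1}^{\lambda^{(k)}}(1-ht^{(k)}_b/t^{(k)}_a)$. *)

theory Defs
  imports Complex_Main "HOL-Library.Poly_Mapping" "HOL-Combinatorics.Permutations"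
begin

text \<open>Indices of blocks run over 1..N, indices of points over 1..n.
  lam :: nat => nat gives lambda_1..lambda_N (values at other indices are irrelevant).
  An ordered partition I is a map k |-> I_k (blocks for k in 1..N, empty elsewhere).\<close>

definition lamsum :: "(nat \<Rightarrow> nat) \<Rightarrow> nat \<Rightarrow> nat" where
  "lamsum lam k = (\<Sum>i=1..k. lam i)"

definition ordered_partition :: "nat \<Rightarrow> nat \<Rightarrow> (nat \<Rightarrow> nat) \<Rightarrow> (nat \<Rightarrow> nat set) \<Rightarrow> bool" where
  "ordered_partition N n lam I \<longleftrightarrow>
     (\<forall>k\<in>{1..N}. I k \<subseteq> {1..n} \<and> card (I k) = lam k) \<and>
     (\<forall>k. k \<notin> {1..N} \<longrightarrow> I k = {}) \<and>
     (\<forall>k\<in>{1..N}. \<forall>l\<in>{1..N}. k \<noteq> l \<longrightarrow> I k \<inter> I l = {}) \<and>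
     (\<Union>k\<in>{1..N}. I k) = {1..n}"

text \<open>i^(k)_a: the a-th smallest element (a >= 1) of I_1 \<union> ... \<union> I_k.\<close>
definition pidx :: "(nat \<Rightarrow> nat set) \<Rightarrow> nat \<Rightarrow> nat \<Rightarrow> nat" where
  "pidx I k a = sorted_list_of_set (\<Union>i\<in>{1..k}. I i) ! (a - 1)"

definition tvar :: "nat \<Rightarrow> (nat \<Rightarrow> nat \<Rightarrow> complex) \<Rightarrow> (nat \<Rightarrow> complex) \<Rightarrow> nat \<Rightarrow> nat \<Rightarrow> complex" where
  "tvar N t z k a = (if k = N then z a else t k a)"

definition U_fun :: "nat \<Rightarrow> (nat \<Rightarrow> nat) \<Rightarrow> (nat \<Rightarrow> nat set) \<Rightarrow>
    (nat \<Rightarrow> nat \<Rightarrow> complex) \<Rightarrow> (nat \<Rightarrow> complex) \<Rightarrow> complex \<Rightarrow> complex" where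
  "U_fun N lam I t z h =
    (\<Prod>k\<in>{1..N-1}. \<Prod>a\<in>{1..lamsum lam k}.
       (\<Prod>c\<in>{c\<in>{1..lamsum lam (k+1)}. pidx I (k+1) c < pidx I k a}.
           1 - h * tvar N t z (k+1) c / tvar N t z k a) *
       (\<Prod>c\<in>{c\<in>{1..lamsum lam (k+1)}. pidx I (k+1) c > pidx I k a}.
           1 - tvar N t z (k+1) c / tvar N t z k a) *
       (\<Prod>b\<in>{a+1..lamsum lam k}.
           (1 - h * tvar N t z k b / tvar N t z k a) / (1 - tvar N t z k b / tvar N t z k a)))"

text \<open>Tuples of permutations (pi_1,...,pi_{N-1}), pi_k in S_{lambda^(k)}; this realises
  Sym_{t^(1)} ... Sym_{t^(N-1)}.\<close>
definition sym_perms :: "nat \<Rightarrow> (nat \<Rightarrow> nat) \<Rightarrow> (nat \<Rightarrow> nat \<Rightarrow> nat) set" where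
  "sym_perms N lam = {\<pi>. \<forall>k. (k \<in> {1..N-1} \<longrightarrow> \<pi> k permutes {1..lamsum lam k}) \<and>
                               (k \<notin> {1..N-1} \<longrightarrow> \<pi> k = id)}"

text \<open>W_I(t,z,h), evaluated at complex points (where the rational expression is defined).\<close>
definition W_fun :: "nat \<Rightarrow> (nat \<Rightarrow> nat) \<Rightarrow> (nat \<Rightarrow> nat set) \<Rightarrow>
    (nat \<Rightarrow> nat \<Rightarrow> complex) \<Rightarrow> (nat \<Rightarrow> complex) \<Rightarrow> complex \<Rightarrow> complex" where
  "W_fun N lam I t z h =
    (1 - h) ^ (\<Sum>k=1..N-1. lamsum lam k) *
    (\<Sum>\<pi>\<in>sym_perms N lam. U_fun N lam I (\<lambda>k a. t k (\<pi> k a)) z h)"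

definition W_sigma :: "nat \<Rightarrow> (nat \<Rightarrow> nat) \<Rightarrow> (nat \<Rightarrow> nat) \<Rightarrow> (nat \<Rightarrow> nat set) \<Rightarrow>
    (nat \<Rightarrow> nat \<Rightarrow> complex) \<Rightarrow> (nat \<Rightarrow> complex) \<Rightarrow> complex \<Rightarrow> complex" where
  "W_sigma N lam \<sigma> I t z h = W_fun N lam (\<lambda>k. inv \<sigma> ` I k) t (\<lambda>a. z (\<sigma> a)) h"

definition zJ :: "(nat \<Rightarrow> nat set) \<Rightarrow> (nat \<Rightarrow> complex) \<Rightarrow> nat \<Rightarrow> nat \<Rightarrow> complex" where
  "zJ J z k a = z (pidx J k a)"

definition E_fun :: "nat \<Rightarrow> (nat \<Rightarrow> nat) \<Rightarrow> (nat \<Rightarrow> nat \<Rightarrow> complex) \<Rightarrow> complex \<Rightarrow> complex" where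
  "E_fun N lam t h = (\<Prod>k\<in>{1..N-1}. \<Prod>a\<in>{1..lamsum lam k}. \<Prod>b\<in>{1..lamsum lam k}.
       1 - h * t k b / t k a)"

text \<open>Laurent polynomials over C in variables h (index 0), z_1..z_n (indices 1..n):
  a finitely supported map from exponent vectors (nat =>0 int) to coefficients.\<close>
definition laurent_vars :: "((nat \<Rightarrow>\<^sub>0 int) \<Rightarrow>\<^sub>0 complex) \<Rightarrow> nat \<Rightarrow> bool" where
  "laurent_vars Q n \<longleftrightarrow> (\<forall>m\<in>Poly_Mapping.keys Q. Poly_Mapping.keys m \<subseteq> {0..n})"

definition laurent_eval :: "((nat \<Rightarrow>\<^sub>0 int) \<Rightarrow>\<^sub>0 complex) \<Rightarrow> nat \<Rightarrow> (nat \<Rightarrow> complex) \<Rightarrow> complex \<Rightarrow> complex" where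
  "laurent_eval Q n z h = (\<Sum>m\<in>Poly_Mapping.keys Q. Poly_Mapping.lookup Q m * h powi Poly_Mapping.lookup m 0 *
       (\<Prod>i\<in>{1..n}. z i powi Poly_Mapping.lookup m i))"

end

theory Submission
  imports Defs "HOL-Combinatorics.Transposition"
begin


definition lmono :: "'v set \<Rightarrow> ('v \<Rightarrow> int) \<Rightarrow> ('v \<Rightarrow> complex) \<Rightarrow> complex" where
  "lmono V e x = (\<Prod>v\<in>V. x v powi e v)"
definition msum :: "'v set \<Rightarrow> (complex \<times> ('v \<Rightarrow> int)) list \<Rightarrow> ('v \<Rightarrow> complex) \<Rightarrow> complex" where
  "msum V M x = (\<Sum>p\<leftarrow>M. fst p * lmono V (snd p) x)"
definition tor :: "'v set \<Rightarrow> ('v \<Rightarrow> complex) set" where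
  "tor V = {x. \<forall>v\<in>V. x v \<noteq> 0}"
definition lau :: "'v set \<Rightarrow> (('v \<Rightarrow> complex) \<Rightarrow> complex) \<Rightarrow> bool" where
  "lau V F \<longleftrightarrow> (\<exists>M. \<forall>x\<in>tor V. F x = msum V M x)"

lemma lau_cong: "lau V F \<Longrightarrow> (\<And>x. x \<in> tor V \<Longrightarrow> F x = G x) \<Longrightarrow> lau V G"
  unfolding lau_def by metis

lemma lau_const: "lau V (\<lambda>x. c)"
  unfolding lau_def msum_def lmono_def by (rule exI[of _ "[(c, \<lambda>_. 0)]"]) simp

lemma msum_append: "msum V (M1 @ M2) x = msum V M1 x + msum V M2 x"
  by (simp add: msum_def)

lemma lau_add: "lau V F \<Longrightarrow> lau V G \<Longrightarrow> lau V (\<lambda>x. F x + G x)"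
  unfolding lau_def by (metis msum_append)

definition mmul :: "(complex \<times> ('v \<Rightarrow> int)) list \<Rightarrow> (complex \<times> ('v \<Rightarrow> int)) list \<Rightarrow> (complex \<times> ('v \<Rightarrow> int)) list" where
  "mmul M1 M2 = concat (map (\<lambda>p. map (\<lambda>q. (fst p * fst q, \<lambda>v. snd p v + snd q v)) M2) M1)"

lemma lmono_add: "x \<in> tor V \<Longrightarrow> lmono V (\<lambda>v. e1 v + e2 v) x = lmono V e1 x * lmono V e2 x"
  unfolding lmono_def tor_def by (auto simp: power_int_add prod.distrib[symmetric] intro!: prod.cong)

lemma msum_mmul: "x \<in> tor V \<Longrightarrow> msum V (mmul M1 M2) x = msum V M1 x * msum V M2 x"
proof (induction M1)
  case Nil then show ?case by (simp add: mmul_def msum_def)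
next
  case (Cons p M1)
  have "msum V (map (\<lambda>q. (fst p * fst q, \<lambda>v. snd p v + snd q v)) M2) x = fst p * lmono V (snd p) x * msum V M2 x"
    unfolding msum_def using Cons.prems by (induction M2) (auto simp: lmono_add algebra_simps)
  moreover have "mmul (p # M1) M2 = map (\<lambda>q. (fst p * fst q, \<lambda>v. snd p v + snd q v)) M2 @ mmul M1 M2"
    by (simp add: mmul_def)
  moreover have "msum V (p # M1) x = fst p * lmono V (snd p) x + msum V M1 x" by (simp add: msum_def)
  ultimately show ?case using Cons by (simp add: msum_append distrib_right)
qed

lemma lau_mult: "lau V F \<Longrightarrow> lau V G \<Longrightarrow> lau V (\<lambda>x. F x * G x)"
  unfolding lau_def by (metis msum_mmul)

lemma lau_var_powi: assumes "finite V" "v \<in> V" shows "lau V (\<lambda>x. x v powi k)"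
proof -
  have "lmono V (\<lambda>u. if u = v then k else 0) x = x v powi k" for x
    unfolding lmono_def using assms by (subst prod.remove[of V v]) auto
  then show ?thesis unfolding lau_def msum_def
    by (intro exI[of _ "[(1, \<lambda>u. if u = v then k else 0)]"]) simp
qed

lemma lau_var: "finite V \<Longrightarrow> v \<in> V \<Longrightarrow> lau V (\<lambda>x. x v)"
  using lau_var_powi[of V v 1] by simp

lemma lau_inv_var: "finite V \<Longrightarrow> v \<in> V \<Longrightarrow> lau V (\<lambda>x. inverse (x v))"
  using lau_var_powi[of V v "-1"] by (simp add: power_int_minus)

lemma lau_uminus: "lau V F \<Longrightarrow> lau V (\<lambda>x. - F x)"
  using lau_mult[OF lau_const[of V "-1"]] by simp

lemma lau_diff: "lau V F \<Longrightarrow> lau V G \<Longrightarrow> lau V (\<lambda>x. F x - G x)"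
  using lau_add[OF _ lau_uminus] by simp

lemma lau_div_var: "finite V \<Longrightarrow> v \<in> V \<Longrightarrow> lau V F \<Longrightarrow> lau V (\<lambda>x. F x / x v)"
  using lau_mult[OF _ lau_inv_var] by (simp add: divide_inverse)

lemma lau_power: "lau V F \<Longrightarrow> lau V (\<lambda>x. F x ^ k)"
  by (induction k) (auto intro: lau_mult lau_const)

lemma lau_sum: "(\<And>i. i \<in> A \<Longrightarrow> lau V (F i)) \<Longrightarrow> lau V (\<lambda>x. \<Sum>i\<in>A. F i x)"
proof (induction A rule: infinite_finite_induct)
  case (infinite A) then show ?case using lau_const[of V 0] by simp
next
  case empty then show ?case using lau_const[of V 0] by simp
next
  case (insert a A) then show ?case by (simp add: lau_add)
qed

lemma lau_prod: "(\<And>i. i \<in> A \<Longrightarrow> lau V (F i)) \<Longrightarrow> lau V (\<lambda>x. \<Prod>i\<in>A. F i x)"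
proof (induction A rule: infinite_finite_induct)
  case (infinite A) then show ?case using lau_const[of V 1] by simp
next
  case empty then show ?case using lau_const[of V 1] by simp
next
  case (insert a A) then show ?case by (simp add: lau_mult)
qed

lemma lau_sum_list: "(\<And>p. p \<in> set M \<Longrightarrow> lau V (F p)) \<Longrightarrow> lau V (\<lambda>x. \<Sum>p\<leftarrow>M. F p x)"
  by (induction M) (auto intro: lau_add lau_const[of V 0, simplified])

lemma lau_subst:
  assumes "finite V" "finite W" "\<And>v. v \<in> V \<Longrightarrow> s v \<in> W" "lau V F"
  shows "lau W (\<lambda>y. F (\<lambda>v. y (s v)))"
proof -
  obtain M where M: "\<forall>x\<in>tor V. F x = msum V M x" using assms(4) unfolding lau_def by blast
  have 1: "lau W (\<lambda>y. \<Sum>p\<leftarrow>M. fst p * (\<Prod>v\<in>V. y (s v) powi snd p v))"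
    apply (rule lau_sum_list)
    apply (rule lau_mult[OF lau_const])
    apply (rule lau_prod)
    apply (rule lau_var_powi)
    using assms by auto
  have 2: "F (\<lambda>v. y (s v)) = (\<Sum>p\<leftarrow>M. fst p * (\<Prod>v\<in>V. y (s v) powi snd p v))" if "y \<in> tor W" for y
  proof -
    have "(\<lambda>v. y (s v)) \<in> tor V" using that assms(3) by (auto simp: tor_def)
    then show ?thesis using M by (simp add: msum_def lmono_def)
  qed
  show ?thesis by (rule lau_cong[OF 1]) (simp add: 2)
qed


lemma ev_tor:
  assumes "finite V" "x \<in> tor V"
  shows "eventually (\<lambda>e. (\<lambda>v. x v + e * d v) \<in> tor V) (at (0::complex))"
proof -
  have "\<forall>v\<in>V. eventually (\<lambda>e. x v + e * d v \<noteq> 0) (at (0::complex))"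
  proof
    fix v assume v: "v \<in> V"
    have "((\<lambda>e. x v + e * d v) \<longlongrightarrow> x v + 0 * d v) (at (0::complex))" by (intro tendsto_intros)
    then show "eventually (\<lambda>e. x v + e * d v \<noteq> 0) (at (0::complex))"
      using assms(2) v by (intro tendsto_imp_eventually_ne) (auto simp: tor_def)
  qed
  then have "eventually (\<lambda>e. \<forall>v\<in>V. x v + e * d v \<noteq> 0) (at (0::complex))"
    by (rule eventually_ball_finite[OF assms(1)])
  then show ?thesis by (simp add: tor_def)
qed

lemma msum_tendsto:
  assumes "x \<in> tor V"
  shows "((\<lambda>e. msum V M (\<lambda>v. x v + e * d v)) \<longlongrightarrow> msum V M x) (at (0::complex))"
proof (induction M)
  case Nil then show ?case by (simp add: msum_def)
next
  case (Cons p M)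
  have L: "((\<lambda>e. lmono V (snd p) (\<lambda>v. x v + e * d v)) \<longlongrightarrow> lmono V (snd p) x) (at (0::complex))"
    unfolding lmono_def
  proof (intro tendsto_prod)
    fix v assume "v \<in> V"
    then have "x v \<noteq> 0" using assms by (auto simp: tor_def)
    have "((\<lambda>e. x v + e * d v) \<longlongrightarrow> x v + 0 * d v) (at (0::complex))" by (intro tendsto_intros)
    then show "((\<lambda>e. (x v + e * d v) powi snd p v) \<longlongrightarrow> x v powi snd p v) (at 0)"
      using \<open>x v \<noteq> 0\<close> by (auto intro!: tendsto_power_int)
  qed
  have e: "msum V (p#M) y = fst p * lmono V (snd p) y + msum V M y" for y by (simp add: msum_def)
  show ?case unfolding e by (rule tendsto_add[OF tendsto_mult[OF tendsto_const L] Cons.IH])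
qed

lemma lau_tendsto:
  assumes "finite V" "lau V F" "x \<in> tor V"
  shows "((\<lambda>e. F (\<lambda>v. x v + e * d v)) \<longlongrightarrow> F x) (at (0::complex))"
proof -
  obtain M where M: "\<forall>y\<in>tor V. F y = msum V M y" using assms(2) unfolding lau_def by blast
  have ev: "eventually (\<lambda>e. msum V M (\<lambda>v. x v + e * d v) = F (\<lambda>v. x v + e * d v)) (at (0::complex))"
    using ev_tor[OF assms(1,3), of d] by eventually_elim (use M in auto)
  show ?thesis using Lim_transform_eventually[OF msum_tendsto[OF assms(3)] ev] M assms(3) by simp
qed

lemma lau_lim_eq:
  assumes "finite V" "lau V F" "lau V G" "x \<in> tor V"
    "eventually (\<lambda>e. F (\<lambda>v. x v + e * d v) = G (\<lambda>v. x v + e * d v)) (at (0::complex))"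
  shows "F x = G x"
proof -
  have 1: "((\<lambda>e. G (\<lambda>v. x v + e * d v)) \<longlongrightarrow> F x) (at (0::complex))"
    using Lim_transform_eventually[OF lau_tendsto[OF assms(1,2,4)] assms(5)] .
  show ?thesis using tendsto_unique[OF at_neq_bot 1 lau_tendsto[OF assms(1,3,4), of d]] .
qed

lemma ev_affine:
  assumes "(a::complex) \<noteq> 0 \<or> b \<noteq> 0"
  shows "eventually (\<lambda>e. a + e * b \<noteq> 0) (at 0)"
proof (cases "a = 0")
  case True
  then have "b \<noteq> 0" using assms by auto
  have "eventually (\<lambda>e::complex. e \<noteq> 0) (at 0)" by (simp add: eventually_at_filter)
  then show ?thesis by eventually_elim (use True \<open>b \<noteq> 0\<close> in auto)
next
  case False
  have "((\<lambda>e. a + e * b) \<longlongrightarrow> a + 0 * b) (at (0::complex))" by (intro tendsto_intros)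
  then show ?thesis using False by (intro tendsto_imp_eventually_ne) auto
qed

lemma affine_eq_iff: "((a::complex) + e*c = b + e*d) \<longleftrightarrow> (a-b) + e*(c-d) = 0"
  by (simp add: algebra_simps eq_iff_diff_eq_0[of "a + e*c"])

lemma lau_dense:
  fixes c :: "'v \<Rightarrow> nat"
  assumes "finite V" "inj_on c V" "lau V F" "lau V G" "finite S"
    "\<forall>q\<in>S. fst q \<in> V \<and> snd q \<in> V \<and> fst q \<noteq> snd q"
    "\<forall>x\<in>tor V. (\<forall>q\<in>S. x (fst q) \<noteq> x (snd q)) \<longrightarrow> F x = G x"
  shows "\<forall>x\<in>tor V. F x = G x"
proof
  fix x assume x: "x \<in> tor V"
  define d where "d v = (of_nat (c v) :: complex)" for v
  have "\<forall>q\<in>S. eventually (\<lambda>e. (x (fst q) - x (snd q)) + e * (d (fst q) - d (snd q)) \<noteq> 0) (at 0)"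
  proof
    fix q assume q: "q \<in> S"
    then have "c (fst q) \<noteq> c (snd q)" using assms(2,6) by (meson inj_onD)
    then have "d (fst q) \<noteq> d (snd q)" unfolding d_def by simp
    then show "eventually (\<lambda>e. (x (fst q) - x (snd q)) + e * (d (fst q) - d (snd q)) \<noteq> 0) (at 0)"
      by (intro ev_affine) simp
  qed
  then have ev1: "eventually (\<lambda>e. \<forall>q\<in>S. (x (fst q) - x (snd q)) + e * (d (fst q) - d (snd q)) \<noteq> 0) (at 0)"
    by (rule eventually_ball_finite[OF assms(5)])
  have "eventually (\<lambda>e. F (\<lambda>v. x v + e * d v) = G (\<lambda>v. x v + e * d v)) (at (0::complex))"
    using ev1 ev_tor[OF assms(1) x, of d]
  proof eventually_elim
    case (elim e)
    have "\<forall>q\<in>S. x (fst q) + e * d (fst q) \<noteq> x (snd q) + e * d (snd q)"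
    proof
      fix q assume "q \<in> S"
      then have "(x (fst q) - x (snd q)) + e * (d (fst q) - d (snd q)) \<noteq> 0" using elim(1) by blast
      then show "x (fst q) + e * d (fst q) \<noteq> x (snd q) + e * d (snd q)" by (metis affine_eq_iff)
    qed
    then show ?case using assms(7) elim(2) by simp
  qed
  then show "F x = G x" by (rule lau_lim_eq[OF assms(1,3,4) x])
qed


definition gq :: "int \<Rightarrow> complex \<Rightarrow> complex \<Rightarrow> complex" where
  "gq k a b = (if 0 \<le> k then (\<Sum>i<nat k. b^(nat k - Suc i) * a^i)
     else - (\<Sum>i<nat (-k). b^(nat (-k) - Suc i) * a^i) * (a powi k * b powi k))"

lemma gq_eq:
  assumes "a \<noteq> 0" "b \<noteq> 0"
  shows "a powi k - b powi k = (a - b) * gq k a b"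
proof (cases "0 \<le> k")
  case True
  then have k: "k = int (nat k)" by simp
  have "a powi k - b powi k = a ^ nat k - b ^ nat k" by (subst (1 2) k) (simp only: power_int_of_nat)
  also have "\<dots> = (a - b) * (\<Sum>i<nat k. b^(nat k - Suc i) * a^i)" by (rule power_diff_sumr2)
  finally show ?thesis using True by (simp add: gq_def)
next
  case False
  define m where "m = nat (-k)"
  have k: "k = - int m" using False m_def by simp
  have "a powi k - b powi k = inverse (a^m) - inverse (b^m)" by (simp add: k power_int_minus)
  also have "\<dots> = - (a^m - b^m) * (inverse (a^m) * inverse (b^m))" using assms by (simp add: field_simps)
  also have "a^m - b^m = (a - b) * (\<Sum>i<m. b^(m - Suc i) * a^i)" by (rule power_diff_sumr2)
  finally show ?thesis using False by (simp add: gq_def m_def[symmetric] k power_int_minus)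
qed

lemma lau_gq:
  assumes "finite V" "u \<in> V" "w \<in> V"
  shows "lau V (\<lambda>x. gq k (x u) (x w))"
proof -
  have 1: "lau V (\<lambda>x. \<Sum>i<nat k. x w ^ (nat k - Suc i) * x u ^ i)" for k
    by (rule lau_sum, rule lau_mult; rule lau_power, rule lau_var) (use assms in auto)
  have 2: "lau V (\<lambda>x. - (\<Sum>i<nat (-k). x w ^ (nat (-k) - Suc i) * x u ^ i) * (x u powi k * x w powi k))"
    by (rule lau_mult[OF lau_uminus[OF 1]], rule lau_mult; rule lau_var_powi) (use assms in auto)
  show ?thesis
  proof (cases "0 \<le> k")
    case True show ?thesis unfolding gq_def if_P[OF True] by (rule 1)
  next
    case False show ?thesis unfolding gq_def if_not_P[OF False] by (rule 2)
  qed
qed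

definition gdiv :: "'v set \<Rightarrow> 'v \<Rightarrow> 'v \<Rightarrow> (complex \<times> ('v \<Rightarrow> int)) list \<Rightarrow> ('v \<Rightarrow> complex) \<Rightarrow> complex" where
  "gdiv V u w M x = (\<Sum>p\<leftarrow>M. fst p * gq (snd p u) (x u) (x w) * (\<Prod>v\<in>V-{u}. x v powi snd p v))"

lemma msum_diff_gdiv:
  assumes "finite V" "u \<in> V" "x \<in> tor V" "w \<in> V"
  shows "msum V M x - msum V M (x(u := x w)) = (x u - x w) * gdiv V u w M x"
proof (induction M)
  case Nil then show ?case by (simp add: msum_def gdiv_def)
next
  case (Cons p M)
  have xu: "x u \<noteq> 0" and xw: "x w \<noteq> 0" using assms by (auto simp: tor_def)
  have r: "(\<Prod>v\<in>V-{u}. (x(u := x w)) v powi snd p v) = (\<Prod>v\<in>V-{u}. x v powi snd p v)"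
    by (rule prod.cong) auto
  have m1: "lmono V (snd p) x = x u powi snd p u * (\<Prod>v\<in>V-{u}. x v powi snd p v)"
    unfolding lmono_def using assms by (simp add: prod.remove)
  have m2: "lmono V (snd p) (x(u := x w)) = x w powi snd p u * (\<Prod>v\<in>V-{u}. x v powi snd p v)"
    unfolding lmono_def using assms r by (simp add: prod.remove)
  define R where "R = (\<Prod>v\<in>V-{u}. x v powi snd p v)"
  define g where "g = gq (snd p u) (x u) (x w)"
  have "fst p * lmono V (snd p) x - fst p * lmono V (snd p) (x(u := x w))
      = fst p * R * (x u powi snd p u - x w powi snd p u)"
    unfolding m1 m2 R_def by (simp add: algebra_simps)
  also have "\<dots> = fst p * R * ((x u - x w) * g)" unfolding g_def using gq_eq[OF xu xw, of "snd p u"] by simp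
  also have "\<dots> = (x u - x w) * (fst p * gq (snd p u) (x u) (x w) * (\<Prod>v\<in>V-{u}. x v powi snd p v))"
    unfolding g_def R_def by (simp add: ac_simps)
  finally have *: "fst p * lmono V (snd p) x - fst p * lmono V (snd p) (x(u := x w))
      = (x u - x w) * (fst p * gq (snd p u) (x u) (x w) * (\<Prod>v\<in>V-{u}. x v powi snd p v))" .
  have e1: "msum V (p # M) y = fst p * lmono V (snd p) y + msum V M y" for y by (simp add: msum_def)
  have e2: "gdiv V u w (p # M) x = fst p * gq (snd p u) (x u) (x w) * (\<Prod>v\<in>V-{u}. x v powi snd p v) + gdiv V u w M x"
    by (simp add: gdiv_def)
  show ?case unfolding e1 e2 distrib_left using Cons * by (simp only: add_diff_add Cons *)
qed

lemma lau_div: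
  assumes "finite V" "u \<in> V" "w \<in> V" "lau V F" "\<forall>x\<in>tor V. x u = x w \<longrightarrow> F x = 0"
  shows "\<exists>G. lau V G \<and> (\<forall>x\<in>tor V. F x = (x u - x w) * G x)"
proof -
  obtain M where M: "\<forall>x\<in>tor V. F x = msum V M x" using assms(4) unfolding lau_def by blast
  have "lau V (gdiv V u w M)"
    unfolding gdiv_def
    apply (rule lau_sum_list)
    apply (rule lau_mult)+
      apply (rule lau_const)
     apply (rule lau_gq[OF assms(1-3)])
    apply (rule lau_prod)
    apply (rule lau_var_powi)
    using assms by auto
  moreover have "F x = (x u - x w) * gdiv V u w M x" if x: "x \<in> tor V" for x
  proof -
    have x': "x(u := x w) \<in> tor V" using x assms by (auto simp: tor_def)
    have "F (x(u := x w)) = 0" using assms(5) x' by simp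
    then have "msum V M (x(u := x w)) = 0" using M x' by simp
    then show ?thesis using msum_diff_gdiv[OF assms(1,2) x assms(3), of M] M x by simp
  qed
  ultimately show ?thesis by blast
qed


lemma self_neg_zero: "(a::complex) = - a \<Longrightarrow> a = 0"
  by simp

lemma lau_pv:
  fixes c :: "'v \<Rightarrow> nat"
  assumes "finite V" "inj_on c V" "u \<in> V" "w \<in> V" "u \<noteq> w" "lau V G"
    "\<forall>x\<in>tor V. x u = x w \<longrightarrow> G x = 0"
    "\<forall>x\<in>tor V. G (\<lambda>v. x (transpose u w v)) = G x"
  shows "\<exists>R. lau V R \<and> (\<forall>x\<in>tor V. G x = (x u - x w)^2 * R x)"
proof -
  obtain G1 where G1: "lau V G1" "\<forall>x\<in>tor V. G x = (x u - x w) * G1 x"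
    using lau_div[OF assms(1,3,4,6,7)] by blast
  have sV: "transpose u w v \<in> V" if "v \<in> V" for v using that assms(3,4) by (auto simp: transpose_def)
  have tsw: "(\<lambda>v. x (transpose u w v)) \<in> tor V" if "x \<in> tor V" for x using that sV by (auto simp: tor_def)
  have l1: "lau V (\<lambda>x. G1 (\<lambda>v. x (transpose u w v)))" by (rule lau_subst[OF assms(1,1) sV G1(1)])
  have l2: "lau V (\<lambda>x. - G1 x)" by (rule lau_uminus[OF G1(1)])
  have anti: "\<forall>x\<in>tor V. G1 (\<lambda>v. x (transpose u w v)) = - G1 x"
  proof (rule lau_dense[OF assms(1,2) l1 l2, of "{(u,w)}"])
    show "finite {(u,w)}" by simp
    show "\<forall>q\<in>{(u,w)}. fst q \<in> V \<and> snd q \<in> V \<and> fst q \<noteq> snd q" using assms by auto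
    show "\<forall>x\<in>tor V. (\<forall>q\<in>{(u, w)}. x (fst q) \<noteq> x (snd q)) \<longrightarrow> G1 (\<lambda>v. x (transpose u w v)) = - G1 x"
    proof (intro ballI impI)
      fix x assume x: "x \<in> tor V" and ne: "\<forall>q\<in>{(u, w)}. x (fst q) \<noteq> x (snd q)"
      let ?y = "\<lambda>v. x (transpose u w v)"
      have "G ?y = (?y u - ?y w) * G1 ?y" using G1(2) tsw[OF x] by blast
      also have "?y u - ?y w = - (x u - x w)" by simp
      finally have "(x u - x w) * G1 x = - (x u - x w) * G1 ?y" using G1(2) x assms(8) by simp
      then have "(x u - x w) * (G1 ?y + G1 x) = 0" by (simp add: algebra_simps)
      then show "G1 ?y = - G1 x" using ne by (simp add: add_eq_0_iff)
    qed
  qed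
  have z: "\<forall>x\<in>tor V. x u = x w \<longrightarrow> G1 x = 0"
  proof (intro ballI impI)
    fix x assume x: "x \<in> tor V" "x u = x w"
    have "(\<lambda>v. x (transpose u w v)) = x" using x(2) by (auto simp: transpose_def)
    then have "G1 x = - G1 x" using anti x(1) by metis
    then show "G1 x = 0" by (rule self_neg_zero)
  qed
  obtain G2 where G2: "lau V G2" "\<forall>x\<in>tor V. G1 x = (x u - x w) * G2 x"
    using lau_div[OF assms(1,3,4) G1(1) z] by blast
  show ?thesis using G1(2) G2 by (intro exI[of _ G2]) (simp add: power2_eq_square)
qed

lemma lau_zero_hyp:
  fixes c :: "'v \<Rightarrow> nat"
  assumes "finite V" "inj_on c V" "u \<in> V" "w \<in> V" "lau V Z" "finite S"
    "\<forall>q\<in>S. fst q \<in> V \<and> snd q \<in> V \<and> fst q \<noteq> snd q \<and> {fst q, snd q} \<noteq> {u, w}"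
    "\<forall>x\<in>tor V. x u = x w \<longrightarrow> (\<Prod>q\<in>S. (x (fst q) - x (snd q))^2) * Z x = 0"
  shows "\<forall>x\<in>tor V. x u = x w \<longrightarrow> Z x = 0"
proof (intro ballI impI)
  fix x assume x: "x \<in> tor V" "x u = x w"
  define r where "r v = (if v = w then u else v)" for v
  define d where "d v = (of_nat (c (r v)) :: complex)" for v
  have "\<forall>q\<in>S. eventually (\<lambda>e. (x (fst q) - x (snd q)) + e * (d (fst q) - d (snd q)) \<noteq> 0) (at 0)"
  proof
    fix q assume q: "q \<in> S"
    have h1: "fst q \<noteq> snd q" "{fst q, snd q} \<noteq> {u, w}" using assms(7) q by auto
    have h2: "{w, u} = {u, w}" by auto
    have "r (fst q) \<noteq> r (snd q)"
    proof
      assume h: "r (fst q) = r (snd q)"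
      show False
      proof (cases "fst q = w")
        case True
        then show False using h h1 h2 unfolding r_def by (cases "snd q = w") auto
      next
        case False
        then show False using h h1 h2 unfolding r_def by (cases "snd q = w") auto
      qed
    qed
    moreover have "r (fst q) \<in> V" "r (snd q) \<in> V" using assms(3,7) q unfolding r_def by auto
    ultimately have "c (r (fst q)) \<noteq> c (r (snd q))" using assms(2) by (meson inj_onD)
    then have "d (fst q) \<noteq> d (snd q)" unfolding d_def by simp
    then show "eventually (\<lambda>e. (x (fst q) - x (snd q)) + e * (d (fst q) - d (snd q)) \<noteq> 0) (at 0)"
      by (intro ev_affine) simp
  qed
  then have ev1: "eventually (\<lambda>e. \<forall>q\<in>S. (x (fst q) - x (snd q)) + e * (d (fst q) - d (snd q)) \<noteq> 0) (at 0)"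
    by (rule eventually_ball_finite[OF assms(6)])
  have "eventually (\<lambda>e. Z (\<lambda>v. x v + e * d v) = 0) (at (0::complex))"
    using ev1 ev_tor[OF assms(1) x(1), of d]
  proof eventually_elim
    case (elim e)
    let ?y = "\<lambda>v. x v + e * d v"
    have yuw: "?y u = ?y w" using x(2) by (simp add: d_def r_def)
    have "\<forall>q\<in>S. (?y (fst q) - ?y (snd q))^2 \<noteq> 0"
    proof
      fix q assume "q \<in> S"
      then have "(x (fst q) - x (snd q)) + e * (d (fst q) - d (snd q)) \<noteq> 0" using elim(1) by blast
      then have "?y (fst q) \<noteq> ?y (snd q)" by (metis affine_eq_iff)
      then show "(?y (fst q) - ?y (snd q))^2 \<noteq> 0" by simp
    qed
    then have "(\<Prod>q\<in>S. (?y (fst q) - ?y (snd q))^2) \<noteq> 0" using assms(6) by (simp add: prod_zero_iff)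
    moreover have "(\<Prod>q\<in>S. (?y (fst q) - ?y (snd q))^2) * Z ?y = 0" using assms(8)[rule_format, OF elim(2) yuw] .
    ultimately show ?case by simp
  qed
  then show "Z x = 0" using lau_lim_eq[OF assms(1,5) lau_const[of V 0] x(1)] by simp
qed

lemma lau_diffsq_prod:
  assumes "finite V" "\<forall>q\<in>S. fst q \<in> V \<and> snd q \<in> V"
  shows "lau V (\<lambda>x. \<Prod>q\<in>S. (x (fst q) - x (snd q))^2)"
  by (rule lau_prod, rule lau_power, rule lau_diff; rule lau_var) (use assms in auto)

lemma lau_gc:
  fixes c :: "'v \<Rightarrow> nat"
  assumes "finite V" "inj_on c V" "finite S"
  shows "\<forall>q\<in>S. fst q \<in> V \<and> snd q \<in> V \<and> fst q \<noteq> snd q \<Longrightarrow>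
    \<forall>q\<in>S. \<forall>q'\<in>S. {fst q, snd q} = {fst q', snd q'} \<longrightarrow> q = q' \<Longrightarrow>
    lau V G \<Longrightarrow> \<forall>q\<in>S. \<exists>R. lau V R \<and> (\<forall>x\<in>tor V. G x = (x (fst q) - x (snd q))^2 * R x) \<Longrightarrow>
    \<exists>R. lau V R \<and> (\<forall>x\<in>tor V. G x = (\<Prod>q\<in>S. (x (fst q) - x (snd q))^2) * R x)"
using assms(3) proof (induction S rule: finite_induct)
  case empty
  then show ?case by (intro exI[of _ G]) simp
next
  case (insert q S)
  have "\<exists>R. lau V R \<and> (\<forall>x\<in>tor V. G x = (\<Prod>p\<in>S. (x (fst p) - x (snd p))^2) * R x)"
    by (rule insert.IH) (use insert.prems in auto)
  then obtain R where R: "lau V R" "\<forall>x\<in>tor V. G x = (\<Prod>p\<in>S. (x (fst p) - x (snd p))^2) * R x"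
    by blast
  obtain u w where q: "q = (u,w)" by (cases q)
  have uw: "u \<in> V" "w \<in> V" "u \<noteq> w" using insert.prems(1) q by auto
  have "\<exists>R. lau V R \<and> (\<forall>x\<in>tor V. G x = (x (fst q) - x (snd q))^2 * R x)"
    using insert.prems(4) by blast
  then obtain R' where R': "lau V R'" "\<forall>x\<in>tor V. G x = (x u - x w)^2 * R' x" using q by auto
  have Sq: "\<forall>p\<in>S. fst p \<in> V \<and> snd p \<in> V \<and> fst p \<noteq> snd p \<and> {fst p, snd p} \<noteq> {u, w}"
  proof
    fix p assume p: "p \<in> S"
    have "{fst p, snd p} \<noteq> {u, w}"
    proof
      assume pq: "{fst p, snd p} = {u, w}"
      have "p = q" using insert.prems(2)[rule_format, of p q] p q pq by simp
      then show False using p insert.hyps(2) by simp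
    qed
    then show "fst p \<in> V \<and> snd p \<in> V \<and> fst p \<noteq> snd p \<and> {fst p, snd p} \<noteq> {u, w}"
      using insert.prems(1) p by auto
  qed
  define DS where "DS (x::'v \<Rightarrow> complex) = (\<Prod>p\<in>S. (x (fst p) - x (snd p))^2)" for x
  have lauDS: "lau V DS" unfolding DS_def by (rule lau_diffsq_prod) (use assms(1) insert.prems(1) in auto)
  have z1: "\<forall>x\<in>tor V. x u = x w \<longrightarrow> R x = 0"
  proof (rule lau_zero_hyp[OF assms(1,2) uw(1,2) R(1) insert.hyps(1) Sq])
    show "\<forall>x\<in>tor V. x u = x w \<longrightarrow> (\<Prod>q\<in>S. (x (fst q) - x (snd q))\<^sup>2) * R x = 0"
    proof (intro ballI impI)
      fix x assume x: "x \<in> tor V" "x u = x w"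
      have "G x = 0" using R'(2) x by simp
      then show "(\<Prod>q\<in>S. (x (fst q) - x (snd q))\<^sup>2) * R x = 0" using R(2) x(1) by simp
    qed
  qed
  obtain R1 where R1: "lau V R1" "\<forall>x\<in>tor V. R x = (x u - x w) * R1 x"
    using lau_div[OF assms(1) uw(1,2) R(1) z1] by blast
  have l1: "lau V (\<lambda>x. DS x * R1 x)" by (rule lau_mult[OF lauDS R1(1)])
  have l2: "lau V (\<lambda>x. (x u - x w) * R' x)"
    by (rule lau_mult[OF lau_diff R'(1)]; rule lau_var) (use assms(1) uw in auto)
  have e3: "\<forall>x\<in>tor V. DS x * R1 x = (x u - x w) * R' x"
  proof (rule lau_dense[OF assms(1,2) l1 l2, of "{(u,w)}"])
    show "finite {(u,w)}" by simp
    show "\<forall>q\<in>{(u,w)}. fst q \<in> V \<and> snd q \<in> V \<and> fst q \<noteq> snd q" using uw by auto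
    show "\<forall>x\<in>tor V. (\<forall>q\<in>{(u, w)}. x (fst q) \<noteq> x (snd q)) \<longrightarrow> DS x * R1 x = (x u - x w) * R' x"
    proof (intro ballI impI)
      fix x assume x: "x \<in> tor V" and ne: "\<forall>q\<in>{(u, w)}. x (fst q) \<noteq> x (snd q)"
      have a: "G x = DS x * ((x u - x w) * R1 x)" using R(2) R1(2) x unfolding DS_def by simp
      have b: "G x = (x u - x w) * ((x u - x w) * R' x)" using R'(2) x by (simp add: power2_eq_square)
      have "(x u - x w) * (DS x * R1 x) = DS x * ((x u - x w) * R1 x)" by (simp add: ac_simps)
      also have "\<dots> = (x u - x w) * ((x u - x w) * R' x)" using a b by (rule trans[OF sym])
      finally have "(x u - x w) * (DS x * R1 x) = (x u - x w) * ((x u - x w) * R' x)" .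
      then show "DS x * R1 x = (x u - x w) * R' x" using ne by simp
    qed
  qed
  have z2: "\<forall>x\<in>tor V. x u = x w \<longrightarrow> R1 x = 0"
    by (rule lau_zero_hyp[OF assms(1,2) uw(1,2) R1(1) insert.hyps(1) Sq]) (use e3 in \<open>simp add: DS_def\<close>)
  obtain R2 where R2: "lau V R2" "\<forall>x\<in>tor V. R1 x = (x u - x w) * R2 x"
    using lau_div[OF assms(1) uw(1,2) R1(1) z2] by blast
  show ?case
  proof (intro exI[of _ R2] conjI ballI)
    show "lau V R2" by (rule R2(1))
    fix x assume x: "x \<in> tor V"
    have "G x = DS x * ((x u - x w) * ((x u - x w) * R2 x))" using R(2) R1(2) R2(2) x unfolding DS_def
      by simp
    also have "\<dots> = ((x u - x w)^2 * DS x) * R2 x" by (simp add: power2_eq_square ac_simps)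
    also have "(x u - x w)^2 * DS x = (\<Prod>q\<in>insert q S. (x (fst q) - x (snd q))^2)"
      using insert.hyps q unfolding DS_def by simp
    finally show "G x = (\<Prod>q\<in>insert q S. (x (fst q) - x (snd q))^2) * R2 x" .
  qed
qed

lemma lau_md:
  fixes c :: "'v \<Rightarrow> nat"
  assumes "finite V" "inj_on c V" "finite A" "lau V E"
    "\<forall>i\<in>A. pu i \<in> V \<and> pw i \<in> V \<and> pu i \<noteq> pw i \<and> pu i \<noteq> h0 \<and> pw i \<noteq> h0"
    "\<forall>x\<in>tor V. eventually (\<lambda>e. E (\<lambda>v. x v + e * (if v = h0 then 1 else 0)) \<noteq> 0) (at 0)"
  shows "lau V S \<Longrightarrow> lau V L \<Longrightarrow> \<forall>x\<in>tor V. E x * S x = L x * (\<Prod>i\<in>A. (x (pu i) - x (pw i))) \<Longrightarrow>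
    \<exists>Q. lau V Q \<and> (\<forall>x\<in>tor V. S x = (\<Prod>i\<in>A. (x (pu i) - x (pw i))) * Q x)"
using assms(3,5) proof (induction A arbitrary: S L rule: finite_induct)
  case empty then show ?case by (intro exI[of _ S]) simp
next
  case (insert i A S L)
  define u where "u = pu i"
  define w where "w = pw i"
  have uw: "u \<in> V" "w \<in> V" "u \<noteq> w" "u \<noteq> h0" "w \<noteq> h0" using insert.prems(4) unfolding u_def w_def by auto
  define DA where "DA (x::'v \<Rightarrow> complex) = (\<Prod>i\<in>A. (x (pu i) - x (pw i)))" for x
  have lauDA: "lau V DA" unfolding DA_def
    by (rule lau_prod, rule lau_diff; rule lau_var) (use assms(1) insert.prems(4) in auto)
  have eq: "\<forall>x\<in>tor V. E x * S x = L x * ((x u - x w) * DA x)"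
    using insert.prems(3) insert.hyps unfolding DA_def u_def w_def by simp
  have z: "\<forall>x\<in>tor V. x u = x w \<longrightarrow> S x = 0"
  proof (intro ballI impI)
    fix x assume x: "x \<in> tor V" "x u = x w"
    define d where "d v = (if v = h0 then 1 else 0 :: complex)" for v
    have "eventually (\<lambda>e. S (\<lambda>v. x v + e * d v) = 0) (at (0::complex))"
      using assms(6)[rule_format, OF x(1)] ev_tor[OF assms(1) x(1), of d]
    proof eventually_elim
      case (elim e)
      let ?y = "\<lambda>v. x v + e * d v"
      have "?y u = ?y w" using x(2) uw by (simp add: d_def)
      then have "E ?y * S ?y = 0" using eq elim(2) by simp
      then show ?case using elim(1) unfolding d_def by simp
    qed
    then show "S x = 0" using lau_lim_eq[OF assms(1) insert.prems(1) lau_const[of V 0] x(1)] by simp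
  qed
  obtain S1 where S1: "lau V S1" "\<forall>x\<in>tor V. S x = (x u - x w) * S1 x"
    using lau_div[OF assms(1) uw(1,2) insert.prems(1) z] by blast
  have l1: "lau V (\<lambda>x. E x * S1 x)" by (rule lau_mult[OF assms(4) S1(1)])
  have l2: "lau V (\<lambda>x. L x * DA x)" by (rule lau_mult[OF insert.prems(2) lauDA])
  have e3: "\<forall>x\<in>tor V. E x * S1 x = L x * DA x"
  proof (rule lau_dense[OF assms(1,2) l1 l2, of "{(u,w)}"])
    show "finite {(u,w)}" by simp
    show "\<forall>q\<in>{(u,w)}. fst q \<in> V \<and> snd q \<in> V \<and> fst q \<noteq> snd q" using uw by auto
    show "\<forall>x\<in>tor V. (\<forall>q\<in>{(u, w)}. x (fst q) \<noteq> x (snd q)) \<longrightarrow> E x * S1 x = L x * DA x"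
    proof (intro ballI impI)
      fix x assume x: "x \<in> tor V" and ne: "\<forall>q\<in>{(u, w)}. x (fst q) \<noteq> x (snd q)"
      have a: "E x * S x = L x * ((x u - x w) * DA x)" using eq x by blast
      have b: "S x = (x u - x w) * S1 x" using S1(2) x by blast
      have "(x u - x w) * (E x * S1 x) = (x u - x w) * (L x * DA x)"
        using a unfolding b by (metis mult.left_commute)
      then show "E x * S1 x = L x * DA x" using ne by simp
    qed
  qed
  obtain Q where Q: "lau V Q" "\<forall>x\<in>tor V. S1 x = DA x * Q x"
    using insert.IH[OF S1(1) insert.prems(2)] e3 insert.prems(4) unfolding DA_def by auto
  show ?case
  proof (intro exI[of _ Q] conjI ballI)
    show "lau V Q" by (rule Q(1))
    fix x assume x: "x \<in> tor V"
    show "S x = (\<Prod>i\<in>insert i A. (x (pu i) - x (pw i))) * Q x"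
      using S1(2) Q(2) x insert.hyps unfolding DA_def u_def w_def by simp
  qed
qed


definition offd :: "nat \<Rightarrow> (nat \<times> nat) set" where
  "offd m = {p. fst p \<in> {1..m} \<and> snd p \<in> {1..m} \<and> fst p \<noteq> snd p}"
definition ltp :: "nat \<Rightarrow> (nat \<times> nat) set" where
  "ltp m = {p. fst p \<in> {1..m} \<and> snd p \<in> {1..m} \<and> fst p < snd p}"

lemma finite_offd: "finite (offd m)"
  by (rule finite_subset[of _ "{1..m} \<times> {1..m}"]) (auto simp: offd_def)

lemma finite_ltp: "finite (ltp m)"
  by (rule finite_subset[of _ "{1..m} \<times> {1..m}"]) (auto simp: ltp_def)

lemma offd_reindex:
  assumes "p permutes {1..m}"
  shows "(\<Prod>q\<in>offd m. f (p (fst q)) (p (snd q))) = (\<Prod>q\<in>offd m. f (fst q) (snd q))"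
proof -
  have "bij_betw (\<lambda>q. (p (fst q), p (snd q))) (offd m) (offd m)"
  proof (rule bij_betwI[where g = "\<lambda>q. (inv p (fst q), inv p (snd q))"])
    have pin: "1 \<le> p x \<and> p x \<le> m" if "1 \<le> x" "x \<le> m" for x
      using permutes_in_image[OF assms, of x] that by auto
    have ipin: "1 \<le> inv p x \<and> inv p x \<le> m" if "1 \<le> x" "x \<le> m" for x
      using permutes_in_image[OF permutes_inv[OF assms], of x] that by auto
    have pinj: "p x = p y \<Longrightarrow> x = y" for x y using permutes_inj[OF assms] by (auto dest: injD)
    have ipinj: "inv p x = inv p y \<Longrightarrow> x = y" for x y using permutes_inj[OF permutes_inv[OF assms]] by (auto dest: injD)
    show "(\<lambda>q. (p (fst q), p (snd q))) \<in> offd m \<rightarrow> offd m"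
      using pin pinj unfolding offd_def by auto
    show "(\<lambda>q. (inv p (fst q), inv p (snd q))) \<in> offd m \<rightarrow> offd m"
      using ipin ipinj unfolding offd_def by auto
    show "(inv p (fst (p (fst q), p (snd q))), inv p (snd (p (fst q), p (snd q)))) = q" for q
      using assms by (simp add: permutes_inverses)
    show "(p (fst (inv p (fst q), inv p (snd q))), p (snd (inv p (fst q), inv p (snd q)))) = q" for q
      using assms by (simp add: permutes_inverses)
  qed
  from prod.reindex_bij_betw[OF this, of "\<lambda>q. f (fst q) (snd q)"] show ?thesis by simp
qed

lemma offd_rows:
  "(\<Prod>q\<in>offd m. f (fst q) (snd q)) = (\<Prod>a\<in>{1..m}. (\<Prod>b\<in>{a+1..m}. f a b) * (\<Prod>b\<in>{1..a-1}. f a b))"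
proof -
  have "offd m = Sigma {1..m} (\<lambda>a. {a+1..m} \<union> {1..a-1})" by (auto simp: offd_def)
  moreover have "(\<Prod>a\<in>{1..m}. \<Prod>b\<in>{a+1..m} \<union> {1..a-1}. f a b) = (\<Prod>q\<in>Sigma {1..m} (\<lambda>a. {a+1..m} \<union> {1..a-1}). f (fst q) (snd q))"
    using prod.Sigma[of "{1..m}" "\<lambda>a. {a+1..m} \<union> {1..a-1}" "\<lambda>a b. f a b"] by (simp add: split_beta)
  ultimately have "(\<Prod>q\<in>offd m. f (fst q) (snd q)) = (\<Prod>a\<in>{1..m}. \<Prod>b\<in>{a+1..m} \<union> {1..a-1}. f a b)"
    by simp
  also have "\<dots> = (\<Prod>a\<in>{1..m}. (\<Prod>b\<in>{a+1..m}. f a b) * (\<Prod>b\<in>{1..a-1}. f a b))"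
    by (intro prod.cong refl prod.union_disjoint) auto
  finally show ?thesis .
qed

lemma offd_ltp:
  "(\<Prod>q\<in>offd m. f (fst q) (snd q)) = (\<Prod>q\<in>ltp m. f (fst q) (snd q) * f (snd q) (fst q))"
proof -
  have u: "offd m = ltp m \<union> (\<lambda>q. (snd q, fst q)) ` ltp m" by (auto simp: offd_def ltp_def image_iff)
  have d: "ltp m \<inter> (\<lambda>q. (snd q, fst q)) ` ltp m = {}" by (auto simp: ltp_def)
  have i: "inj_on (\<lambda>q. (snd q, fst q)) (ltp m)" by (auto simp: inj_on_def)
  have "(\<Prod>q\<in>offd m. f (fst q) (snd q)) = (\<Prod>q\<in>ltp m. f (fst q) (snd q)) * (\<Prod>q\<in>(\<lambda>q. (snd q, fst q)) ` ltp m. f (fst q) (snd q))"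
    unfolding u by (rule prod.union_disjoint) (auto simp: finite_ltp d)
  also have "(\<Prod>q\<in>(\<lambda>q. (snd q, fst q)) ` ltp m. f (fst q) (snd q)) = (\<Prod>q\<in>ltp m. f (snd q) (fst q))"
    by (subst prod.reindex[OF i]) simp
  finally show ?thesis by (simp add: prod.distrib)
qed

lemma sym_permsD:
  "\<pi> \<in> sym_perms N lam \<Longrightarrow> k \<in> {1..N-1} \<Longrightarrow> \<pi> k permutes {1..lamsum lam k}"
  by (simp add: sym_perms_def)

lemma sym_perms_reindex:
  assumes "\<rho> \<in> sym_perms N lam"
  shows "bij_betw (\<lambda>\<pi>. \<lambda>k. \<rho> k \<circ> \<pi> k) (sym_perms N lam) (sym_perms N lam)"
proof (rule bij_betwI[where g = "\<lambda>\<pi>. \<lambda>k. inv (\<rho> k) \<circ> \<pi> k"])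
  have r: "\<rho> k permutes {1..lamsum lam k}" if "k \<in> {1..N-1}" for k using assms that by (simp add: sym_perms_def)
  have r2: "\<rho> k = id" if "k \<notin> {1..N-1}" for k using assms that by (simp add: sym_perms_def)
  show "(\<lambda>\<pi>. \<lambda>k. \<rho> k \<circ> \<pi> k) \<in> sym_perms N lam \<rightarrow> sym_perms N lam"
    using r r2 by (auto simp: sym_perms_def intro: permutes_compose)
  show "(\<lambda>\<pi>. \<lambda>k. inv (\<rho> k) \<circ> \<pi> k) \<in> sym_perms N lam \<rightarrow> sym_perms N lam"
    using r r2 by (auto simp: sym_perms_def intro: permutes_compose permutes_inv)
  show "(\<lambda>k. inv (\<rho> k) \<circ> (\<rho> k \<circ> \<pi> k)) = \<pi>" if "\<pi> \<in> sym_perms N lam" for \<pi>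
  proof
    fix k show "inv (\<rho> k) \<circ> (\<rho> k \<circ> \<pi> k) = \<pi> k"
      using r[of k] r2[of k] by (cases "k \<in> {1..N-1}") (simp_all add: o_assoc permutes_inv_o)
  qed
  show "(\<lambda>k. \<rho> k \<circ> (inv (\<rho> k) \<circ> \<pi> k)) = \<pi>" if "\<pi> \<in> sym_perms N lam" for \<pi>
  proof
    fix k show "\<rho> k \<circ> (inv (\<rho> k) \<circ> \<pi> k) = \<pi> k"
      using r[of k] r2[of k] by (cases "k \<in> {1..N-1}") (simp_all add: o_assoc permutes_inv_o)
  qed
qed

lemma W_fun_sym:
  assumes "\<rho> \<in> sym_perms N lam"
  shows "W_fun N lam I (\<lambda>k c. t k (\<rho> k c)) z h = W_fun N lam I t z h"
proof -
  have "(\<Sum>\<pi>\<in>sym_perms N lam. U_fun N lam I (\<lambda>k a. t k (\<rho> k (\<pi> k a))) z h)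
      = (\<Sum>\<pi>\<in>sym_perms N lam. U_fun N lam I (\<lambda>k a. t k (\<pi> k a)) z h)"
    using sum.reindex_bij_betw[OF sym_perms_reindex[OF assms], of "\<lambda>\<pi>. U_fun N lam I (\<lambda>k a. t k (\<pi> k a)) z h"]
    by simp
  then show ?thesis by (simp add: W_fun_def)
qed


datatype var = TV nat nat | ZV nat | HV

definition V1 :: "nat \<Rightarrow> (nat \<Rightarrow> nat) \<Rightarrow> var set" where
  "V1 N lam = (\<lambda>p. TV (fst p) (snd p)) ` (SIGMA k:{1..N-1}. {1..lamsum lam k}) \<union> ZV ` {1..lamsum lam N} \<union> {HV}"

lemma finite_V1: "finite (V1 N lam)"
  unfolding V1_def by (intro finite_UnI finite_imageI finite_SigmaI) auto

lemma TV_in_V1: "TV k a \<in> V1 N lam \<longleftrightarrow> k \<in> {1..N-1} \<and> a \<in> {1..lamsum lam k}"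
  unfolding V1_def by (auto intro: rev_image_eqI[of "(k,a)"])
lemma ZV_in_V1: "ZV c \<in> V1 N lam \<longleftrightarrow> c \<in> {1..lamsum lam N}"
  by (auto simp: V1_def)
lemma HV_in_V1: "HV \<in> V1 N lam"
  by (auto simp: V1_def)

definition vT :: "nat \<Rightarrow> (nat \<Rightarrow> nat \<Rightarrow> nat) \<Rightarrow> nat \<Rightarrow> nat \<Rightarrow> var" where
  "vT N \<pi> k a = (if k = N then ZV a else TV k (\<pi> k a))"

lemma vT_in:
  assumes "\<pi> \<in> sym_perms N lam" "k \<in> {1..N}" "a \<in> {1..lamsum lam k}"
  shows "vT N \<pi> k a \<in> V1 N lam"
proof (cases "k = N")
  case True then show ?thesis using assms by (simp add: vT_def ZV_in_V1)
next
  case False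
  then have k: "k \<in> {1..N-1}" using assms(2) by auto
  have p: "\<pi> k permutes {1..lamsum lam k}" by (rule sym_permsD[OF assms(1) k])
  have "\<pi> k a \<in> {1..lamsum lam k}" using permutes_in_image[OF p, of a] assms(3) by blast
  then show ?thesis using False k by (simp add: vT_def TV_in_V1)
qed

lemma vT_low: "k \<in> {1..N-1} \<Longrightarrow> vT N \<pi> k a = TV k (\<pi> k a)"
  by (auto simp: vT_def)

lemma tvar_vT: "tvar N (\<lambda>k a. x (TV k (\<pi> k a))) (\<lambda>c. x (ZV c)) k a = x (vT N \<pi> k a)"
  by (simp add: tvar_def vT_def)

definition Om1 :: "nat \<Rightarrow> (nat \<Rightarrow> nat) \<Rightarrow> (var \<Rightarrow> complex) set" where
  "Om1 N lam = {x \<in> tor (V1 N lam). \<forall>k\<in>{1..N-1}. \<forall>q\<in>offd (lamsum lam k). x (TV k (fst q)) \<noteq> x (TV k (snd q))}"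

definition Dl :: "nat \<Rightarrow> (nat \<Rightarrow> nat) \<Rightarrow> (var \<Rightarrow> complex) \<Rightarrow> complex" where
  "Dl N lam x = (\<Prod>k\<in>{1..N-1}. \<Prod>q\<in>offd (lamsum lam k). (x (TV k (fst q)) - x (TV k (snd q))))"

definition Gt :: "nat \<Rightarrow> (nat \<Rightarrow> nat) \<Rightarrow> (nat \<Rightarrow> nat set) \<Rightarrow> (nat \<Rightarrow> nat \<Rightarrow> nat) \<Rightarrow> (var \<Rightarrow> complex) \<Rightarrow> complex" where
  "Gt N lam I \<pi> x = (\<Prod>k\<in>{1..N-1}. \<Prod>a\<in>{1..lamsum lam k}.
     (\<Prod>c\<in>{c\<in>{1..lamsum lam (k+1)}. pidx I (k+1) c < pidx I k a}. 1 - x HV * x (vT N \<pi> (k+1) c) / x (vT N \<pi> k a)) *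
     (\<Prod>c\<in>{c\<in>{1..lamsum lam (k+1)}. pidx I (k+1) c > pidx I k a}. 1 - x (vT N \<pi> (k+1) c) / x (vT N \<pi> k a)) *
     (\<Prod>b\<in>{a+1..lamsum lam k}. x (vT N \<pi> k a) - x HV * x (vT N \<pi> k b)) *
     (\<Prod>b\<in>{1..a-1}. x (vT N \<pi> k a) - x (vT N \<pi> k b)))"

definition G1 :: "nat \<Rightarrow> (nat \<Rightarrow> nat) \<Rightarrow> (nat \<Rightarrow> nat set) \<Rightarrow> (var \<Rightarrow> complex) \<Rightarrow> complex" where
  "G1 N lam I x = (1 - x HV) ^ (\<Sum>k=1..N-1. lamsum lam k) * (\<Sum>\<pi>\<in>sym_perms N lam. Gt N lam I \<pi> x)"

lemma U_eq:
  "U_fun N lam I (\<lambda>k a. x (TV k (\<pi> k a))) (\<lambda>c. x (ZV c)) (x HV) =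
   (\<Prod>k\<in>{1..N-1}. \<Prod>a\<in>{1..lamsum lam k}.
     (\<Prod>c\<in>{c\<in>{1..lamsum lam (k+1)}. pidx I (k+1) c < pidx I k a}. 1 - x HV * x (vT N \<pi> (k+1) c) / x (vT N \<pi> k a)) *
     (\<Prod>c\<in>{c\<in>{1..lamsum lam (k+1)}. pidx I (k+1) c > pidx I k a}. 1 - x (vT N \<pi> (k+1) c) / x (vT N \<pi> k a)) *
     (\<Prod>b\<in>{a+1..lamsum lam k}. (1 - x HV * x (vT N \<pi> k b) / x (vT N \<pi> k a)) / (1 - x (vT N \<pi> k b) / x (vT N \<pi> k a))))"
  unfolding U_fun_def tvar_vT ..

lemma ratio_id: "(X::complex) \<noteq> 0 \<Longrightarrow> X \<noteq> Y \<Longrightarrow> (1 - h * Y / X) / (1 - Y / X) * (X - Y) = X - h * Y"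
proof -
  assume X: "X \<noteq> 0" and XY: "X \<noteq> Y"
  have "1 - Y / X = (X - Y) / X" using X by (simp add: field_simps)
  moreover have "1 - h * Y / X = (X - h * Y) / X" using X by (simp add: field_simps)
  ultimately show ?thesis using X XY by simp
qed

lemma Om1_facts:
  assumes x: "x \<in> Om1 N lam" and \<pi>: "\<pi> \<in> sym_perms N lam" and k: "k \<in> {1..N}"
    and a: "a \<in> {1..lamsum lam k}"
  shows "x (vT N \<pi> k a) \<noteq> 0"
  using vT_in[OF \<pi> k a] x by (auto simp: Om1_def tor_def)

lemma Om1_dist:
  assumes x: "x \<in> Om1 N lam" and \<pi>: "\<pi> \<in> sym_perms N lam" and k: "k \<in> {1..N-1}"
    and a: "a \<in> {1..lamsum lam k}" and b: "b \<in> {1..lamsum lam k}" and ab: "a \<noteq> b"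
  shows "x (vT N \<pi> k a) \<noteq> x (vT N \<pi> k b)"
proof -
  have p: "\<pi> k permutes {1..lamsum lam k}" by (rule sym_permsD[OF \<pi> k])
  have "\<pi> k a \<noteq> \<pi> k b" using permutes_inj[OF p] ab by (auto dest: injD)
  moreover have "\<pi> k a \<in> {1..lamsum lam k}" "\<pi> k b \<in> {1..lamsum lam k}"
    using permutes_in_image[OF p, of a] permutes_in_image[OF p, of b] a b by blast+
  ultimately have q: "(\<pi> k a, \<pi> k b) \<in> offd (lamsum lam k)" by (simp add: offd_def)
  have "\<forall>q\<in>offd (lamsum lam k). x (TV k (fst q)) \<noteq> x (TV k (snd q))" using x k unfolding Om1_def by blast
  from bspec[OF this q] have "x (TV k (\<pi> k a)) \<noteq> x (TV k (\<pi> k b))" by simp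
  then show ?thesis using k by (simp add: vT_low)
qed

lemma Dl_perm:
  assumes \<pi>: "\<pi> \<in> sym_perms N lam"
  shows "Dl N lam x = (\<Prod>k\<in>{1..N-1}. \<Prod>a\<in>{1..lamsum lam k}.
     (\<Prod>b\<in>{a+1..lamsum lam k}. x (vT N \<pi> k a) - x (vT N \<pi> k b)) *
     (\<Prod>b\<in>{1..a-1}. x (vT N \<pi> k a) - x (vT N \<pi> k b)))"
  unfolding Dl_def
proof (rule prod.cong[OF refl])
  fix k assume k: "k \<in> {1..N-1}"
  have p: "\<pi> k permutes {1..lamsum lam k}" by (rule sym_permsD[OF \<pi> k])
  have "(\<Prod>q\<in>offd (lamsum lam k). x (TV k (fst q)) - x (TV k (snd q)))
      = (\<Prod>q\<in>offd (lamsum lam k). x (TV k (\<pi> k (fst q))) - x (TV k (\<pi> k (snd q))))"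
    using offd_reindex[OF p, of "\<lambda>a b. x (TV k a) - x (TV k b)"] by simp
  also have "\<dots> = (\<Prod>a\<in>{1..lamsum lam k}.
     (\<Prod>b\<in>{a+1..lamsum lam k}. x (TV k (\<pi> k a)) - x (TV k (\<pi> k b))) *
     (\<Prod>b\<in>{1..a-1}. x (TV k (\<pi> k a)) - x (TV k (\<pi> k b))))"
    by (rule offd_rows)
  finally show "(\<Prod>q\<in>offd (lamsum lam k). x (TV k (fst q)) - x (TV k (snd q))) = (\<Prod>a\<in>{1..lamsum lam k}.
     (\<Prod>b\<in>{a+1..lamsum lam k}. x (vT N \<pi> k a) - x (vT N \<pi> k b)) *
     (\<Prod>b\<in>{1..a-1}. x (vT N \<pi> k a) - x (vT N \<pi> k b)))"
    using k by (simp add: vT_low)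
qed

lemma UDl_eq:
  assumes x: "x \<in> Om1 N lam" and \<pi>: "\<pi> \<in> sym_perms N lam"
  shows "U_fun N lam I (\<lambda>k a. x (TV k (\<pi> k a))) (\<lambda>c. x (ZV c)) (x HV) * Dl N lam x = Gt N lam I \<pi> x"
  unfolding U_eq Dl_perm[OF \<pi>] Gt_def prod.distrib[symmetric]
proof (rule prod.cong[OF refl], rule prod.cong[OF refl])
  fix k a assume k: "k \<in> {1..N-1}" and a: "a \<in> {1..lamsum lam k}"
  let ?X = "\<lambda>b. x (vT N \<pi> k b)"
  have kN: "k \<in> {1..N}" using k by auto
  have "(\<Prod>b\<in>{a+1..lamsum lam k}. (1 - x HV * ?X b / ?X a) / (1 - ?X b / ?X a)) * (\<Prod>b\<in>{a+1..lamsum lam k}. ?X a - ?X b)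
      = (\<Prod>b\<in>{a+1..lamsum lam k}. (1 - x HV * ?X b / ?X a) / (1 - ?X b / ?X a) * (?X a - ?X b))"
    by (rule prod.distrib[symmetric])
  also have "\<dots> = (\<Prod>b\<in>{a+1..lamsum lam k}. ?X a - x HV * ?X b)"
  proof (rule prod.cong[OF refl])
    fix b assume b: "b \<in> {a+1..lamsum lam k}"
    show "(1 - x HV * ?X b / ?X a) / (1 - ?X b / ?X a) * (?X a - ?X b) = ?X a - x HV * ?X b"
      by (rule ratio_id[OF Om1_facts[OF x \<pi> kN a] Om1_dist[OF x \<pi> k a]]) (use b a in auto)
  qed
  finally have *: "(\<Prod>b\<in>{a+1..lamsum lam k}. (1 - x HV * ?X b / ?X a) / (1 - ?X b / ?X a)) * (\<Prod>b\<in>{a+1..lamsum lam k}. ?X a - ?X b)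
      = (\<Prod>b\<in>{a+1..lamsum lam k}. ?X a - x HV * ?X b)" .
  show "(\<Prod>c\<in>{c\<in>{1..lamsum lam (k+1)}. pidx I (k+1) c < pidx I k a}. 1 - x HV * x (vT N \<pi> (k+1) c) / ?X a) *
     (\<Prod>c\<in>{c\<in>{1..lamsum lam (k+1)}. pidx I (k+1) c > pidx I k a}. 1 - x (vT N \<pi> (k+1) c) / ?X a) *
     (\<Prod>b\<in>{a+1..lamsum lam k}. (1 - x HV * ?X b / ?X a) / (1 - ?X b / ?X a)) *
     ((\<Prod>b\<in>{a+1..lamsum lam k}. ?X a - ?X b) * (\<Prod>b\<in>{1..a-1}. ?X a - ?X b)) =
     (\<Prod>c\<in>{c\<in>{1..lamsum lam (k+1)}. pidx I (k+1) c < pidx I k a}. 1 - x HV * x (vT N \<pi> (k+1) c) / ?X a) *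
     (\<Prod>c\<in>{c\<in>{1..lamsum lam (k+1)}. pidx I (k+1) c > pidx I k a}. 1 - x (vT N \<pi> (k+1) c) / ?X a) *
     (\<Prod>b\<in>{a+1..lamsum lam k}. ?X a - x HV * ?X b) *
     (\<Prod>b\<in>{1..a-1}. ?X a - ?X b)"
    using * by (simp add: mult.assoc)
qed

lemma G1_eq:
  assumes x: "x \<in> Om1 N lam"
  shows "G1 N lam I x = W_fun N lam I (\<lambda>k a. x (TV k a)) (\<lambda>c. x (ZV c)) (x HV) * Dl N lam x"
proof -
  have "(\<Sum>\<pi>\<in>sym_perms N lam. Gt N lam I \<pi> x) =
        (\<Sum>\<pi>\<in>sym_perms N lam. U_fun N lam I (\<lambda>k a. x (TV k (\<pi> k a))) (\<lambda>c. x (ZV c)) (x HV) * Dl N lam x)"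
    using UDl_eq[OF x] by (intro sum.cong) auto
  then show ?thesis unfolding G1_def W_fun_def by (simp add: sum_distrib_right mult.assoc)
qed


lemma lau_Gt:
  assumes \<pi>: "\<pi> \<in> sym_perms N lam"
  shows "lau (V1 N lam) (Gt N lam I \<pi>)"
proof -
  let ?V = "V1 N lam"
  have fin: "finite ?V" by (rule finite_V1)
  have vin: "vT N \<pi> k a \<in> ?V" if "k \<in> {1..N}" "a \<in> {1..lamsum lam k}" for k a
    using vT_in[OF \<pi> that] .
  have lv: "lau ?V (\<lambda>x. x (vT N \<pi> k a))" if "k \<in> {1..N}" "a \<in> {1..lamsum lam k}" for k a
    using lau_var[OF fin vin[OF that]] .
  have lh: "lau ?V (\<lambda>x. x HV)" by (rule lau_var[OF fin HV_in_V1])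
  show ?thesis unfolding Gt_def
  proof (rule lau_prod, rule lau_prod)
    fix k a assume k: "k \<in> {1..N-1}" and a: "a \<in> {1..lamsum lam k}"
    have k1: "k \<in> {1..N}" "k+1 \<in> {1..N}" using k by auto
    have A: "lau ?V (\<lambda>x. \<Prod>c\<in>{c\<in>{1..lamsum lam (k+1)}. pidx I (k+1) c < pidx I k a}. 1 - x HV * x (vT N \<pi> (k+1) c) / x (vT N \<pi> k a))"
    proof (rule lau_prod)
      fix c assume c: "c \<in> {c\<in>{1..lamsum lam (k+1)}. pidx I (k+1) c < pidx I k a}"
      then have c': "c \<in> {1..lamsum lam (k+1)}" by simp
      show "lau ?V (\<lambda>x. 1 - x HV * x (vT N \<pi> (k+1) c) / x (vT N \<pi> k a))"
        by (rule lau_diff[OF lau_const lau_div_var[OF fin vin[OF k1(1) a] lau_mult[OF lh lv[OF k1(2) c']]]])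
    qed
    have B: "lau ?V (\<lambda>x. \<Prod>c\<in>{c\<in>{1..lamsum lam (k+1)}. pidx I (k+1) c > pidx I k a}. 1 - x (vT N \<pi> (k+1) c) / x (vT N \<pi> k a))"
    proof (rule lau_prod)
      fix c assume c: "c \<in> {c\<in>{1..lamsum lam (k+1)}. pidx I (k+1) c > pidx I k a}"
      then have c': "c \<in> {1..lamsum lam (k+1)}" by simp
      show "lau ?V (\<lambda>x. 1 - x (vT N \<pi> (k+1) c) / x (vT N \<pi> k a))"
        by (rule lau_diff[OF lau_const lau_div_var[OF fin vin[OF k1(1) a] lv[OF k1(2) c']]])
    qed
    have C: "lau ?V (\<lambda>x. \<Prod>b\<in>{a+1..lamsum lam k}. x (vT N \<pi> k a) - x HV * x (vT N \<pi> k b))"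
    proof (rule lau_prod)
      fix b assume b: "b \<in> {a+1..lamsum lam k}"
      then have b': "b \<in> {1..lamsum lam k}" by simp
      show "lau ?V (\<lambda>x. x (vT N \<pi> k a) - x HV * x (vT N \<pi> k b))"
        by (rule lau_diff[OF lv[OF k1(1) a] lau_mult[OF lh lv[OF k1(1) b']]])
    qed
    have D: "lau ?V (\<lambda>x. \<Prod>b\<in>{1..a-1}. x (vT N \<pi> k a) - x (vT N \<pi> k b))"
    proof (rule lau_prod)
      fix b assume b: "b \<in> {1..a-1}"
      then have b': "b \<in> {1..lamsum lam k}" using a by auto
      show "lau ?V (\<lambda>x. x (vT N \<pi> k a) - x (vT N \<pi> k b))"
        by (rule lau_diff[OF lv[OF k1(1) a] lv[OF k1(1) b']])
    qed
    show "lau ?V (\<lambda>x. (\<Prod>c\<in>{c\<in>{1..lamsum lam (k+1)}. pidx I (k+1) c < pidx I k a}. 1 - x HV * x (vT N \<pi> (k+1) c) / x (vT N \<pi> k a)) *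
     (\<Prod>c\<in>{c\<in>{1..lamsum lam (k+1)}. pidx I (k+1) c > pidx I k a}. 1 - x (vT N \<pi> (k+1) c) / x (vT N \<pi> k a)) *
     (\<Prod>b\<in>{a+1..lamsum lam k}. x (vT N \<pi> k a) - x HV * x (vT N \<pi> k b)) *
     (\<Prod>b\<in>{1..a-1}. x (vT N \<pi> k a) - x (vT N \<pi> k b)))"
      by (rule lau_mult[OF lau_mult[OF lau_mult[OF A B] C] D])
  qed
qed

lemma lau_G1: "lau (V1 N lam) (G1 N lam I)"
proof -
  have lh: "lau (V1 N lam) (\<lambda>x. x HV)" by (rule lau_var[OF finite_V1 HV_in_V1])
  have "lau (V1 N lam) (\<lambda>x. (1 - x HV) ^ (\<Sum>k=1..N-1. lamsum lam k) * (\<Sum>\<pi>\<in>sym_perms N lam. Gt N lam I \<pi> x))"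
    by (rule lau_mult[OF lau_power[OF lau_diff[OF lau_const lh]] lau_sum[OF lau_Gt]])
  then show ?thesis unfolding G1_def[abs_def] .
qed

lemma Gt_vanish:
  assumes \<pi>: "\<pi> \<in> sym_perms N lam" and k: "k \<in> {1..N-1}" and q: "q \<in> offd (lamsum lam k)"
    and e: "x (TV k (fst q)) = x (TV k (snd q))"
  shows "Gt N lam I \<pi> x = 0"
proof -
  have p: "\<pi> k permutes {1..lamsum lam k}" by (rule sym_permsD[OF \<pi> k])
  define a' where "a' = inv (\<pi> k) (fst q)"
  define b' where "b' = inv (\<pi> k) (snd q)"
  have qq: "fst q \<in> {1..lamsum lam k}" "snd q \<in> {1..lamsum lam k}" "fst q \<noteq> snd q" using q by (auto simp: offd_def)
  have a'in: "a' \<in> {1..lamsum lam k}" using permutes_in_image[OF permutes_inv[OF p], of "fst q"] qq unfolding a'_def by blast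
  have b'in: "b' \<in> {1..lamsum lam k}" using permutes_in_image[OF permutes_inv[OF p], of "snd q"] qq unfolding b'_def by blast
  have pa: "\<pi> k a' = fst q" and pb: "\<pi> k b' = snd q" unfolding a'_def b'_def using permutes_inverses(1)[OF p] by auto
  have ab: "a' \<noteq> b'" using pa pb qq by auto
  define i where "i = max a' b'"
  define j where "j = min a' b'"
  have iin: "i \<in> {1..lamsum lam k}" using a'in b'in by (auto simp: i_def max_def)
  have jin: "j \<in> {1..i-1}" using a'in b'in ab by (auto simp: i_def j_def max_def min_def)
  have "x (TV k (\<pi> k i)) = x (TV k (\<pi> k j))" using e pa pb by (auto simp: i_def j_def max_def min_def)
  then have z: "x (vT N \<pi> k i) - x (vT N \<pi> k j) = 0" using k by (simp add: vT_low)
  have "(\<Prod>b\<in>{1..i-1}. x (vT N \<pi> k i) - x (vT N \<pi> k b)) = 0"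
    by (rule prod_zero[OF finite_atLeastAtMost]) (use z jin in blast)
  then have z2: "(\<Prod>a\<in>{1..lamsum lam k}.
     (\<Prod>c\<in>{c\<in>{1..lamsum lam (k+1)}. pidx I (k+1) c < pidx I k a}. 1 - x HV * x (vT N \<pi> (k+1) c) / x (vT N \<pi> k a)) *
     (\<Prod>c\<in>{c\<in>{1..lamsum lam (k+1)}. pidx I (k+1) c > pidx I k a}. 1 - x (vT N \<pi> (k+1) c) / x (vT N \<pi> k a)) *
     (\<Prod>b\<in>{a+1..lamsum lam k}. x (vT N \<pi> k a) - x HV * x (vT N \<pi> k b)) *
     (\<Prod>b\<in>{1..a-1}. x (vT N \<pi> k a) - x (vT N \<pi> k b))) = 0"
    by (intro prod_zero[OF finite_atLeastAtMost] bexI[OF _ iin]) simp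
  show ?thesis unfolding Gt_def
    by (rule prod_zero[OF finite_atLeastAtMost], rule bexI[where x=k]) (use z2 k in simp_all)
qed

lemma G1_vanish:
  assumes k: "k \<in> {1..N-1}" and q: "q \<in> offd (lamsum lam k)"
    and e: "x (TV k (fst q)) = x (TV k (snd q))"
  shows "G1 N lam I x = 0"
  unfolding G1_def using Gt_vanish[OF _ k q e] by simp


definition SO :: "nat \<Rightarrow> (nat \<Rightarrow> nat) \<Rightarrow> (var \<times> var) set" where
  "SO N lam = (\<lambda>p. (TV (fst p) (fst (snd p)), TV (fst p) (snd (snd p)))) ` (SIGMA k:{1..N-1}. offd (lamsum lam k))"
definition S1 :: "nat \<Rightarrow> (nat \<Rightarrow> nat) \<Rightarrow> (var \<times> var) set" where
  "S1 N lam = (\<lambda>p. (TV (fst p) (fst (snd p)), TV (fst p) (snd (snd p)))) ` (SIGMA k:{1..N-1}. ltp (lamsum lam k))"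

lemma finite_SO: "finite (SO N lam)"
  unfolding SO_def by (intro finite_imageI finite_SigmaI finite_offd) auto
lemma finite_S1: "finite (S1 N lam)"
  unfolding S1_def by (intro finite_imageI finite_SigmaI finite_ltp) auto

lemma SO_props: "\<forall>s\<in>SO N lam. fst s \<in> V1 N lam \<and> snd s \<in> V1 N lam \<and> fst s \<noteq> snd s"
  by (auto simp: SO_def offd_def TV_in_V1)
lemma S1_props: "\<forall>s\<in>S1 N lam. fst s \<in> V1 N lam \<and> snd s \<in> V1 N lam \<and> fst s \<noteq> snd s"
  by (auto simp: S1_def ltp_def TV_in_V1)
lemma S1_uniq: "\<forall>s\<in>S1 N lam. \<forall>s'\<in>S1 N lam. {fst s, snd s} = {fst s', snd s'} \<longrightarrow> s = s'"
  by (auto simp: S1_def ltp_def doubleton_eq_iff)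

lemma Om1_iff:
  assumes "x \<in> tor (V1 N lam)" "\<forall>s\<in>SO N lam. x (fst s) \<noteq> x (snd s)"
  shows "x \<in> Om1 N lam"
  using assms unfolding Om1_def SO_def by force

lemma G1_swap:
  assumes k0: "k0 \<in> {1..N-1}" and a: "a \<in> {1..lamsum lam k0}" and b: "b \<in> {1..lamsum lam k0}"
  shows "\<forall>x\<in>tor (V1 N lam). G1 N lam I (\<lambda>v. x (transpose (TV k0 a) (TV k0 b) v)) = G1 N lam I x"
proof -
  let ?tr = "transpose (TV k0 a) (TV k0 b)"
  define \<rho> where "\<rho> k = (if k = k0 then transpose a b else id)" for k
  have \<rho>: "\<rho> \<in> sym_perms N lam" unfolding sym_perms_def \<rho>_def using k0 a b
    by (auto intro: permutes_swap_id permutes_id)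
  have trTV: "?tr (TV k c) = TV k (\<rho> k c)" for k c by (auto simp: transpose_def \<rho>_def)
  have trZ: "?tr (ZV c) = ZV c" "?tr HV = HV" for c by (auto simp: transpose_def)
  have ina: "TV k0 a \<in> V1 N lam" "TV k0 b \<in> V1 N lam" using k0 a b by (auto simp: TV_in_V1)
  have trV: "?tr v \<in> V1 N lam" if "v \<in> V1 N lam" for v using that ina by (auto simp: transpose_def)
  have \<rho>perm: "\<rho> k permutes {1..lamsum lam k}" if "k \<in> {1..N-1}" for k by (rule sym_permsD[OF \<rho> that])
  have om: "\<forall>x\<in>Om1 N lam. G1 N lam I (\<lambda>v. x (?tr v)) = G1 N lam I x"
  proof
    fix x assume x: "x \<in> Om1 N lam"
    let ?y = "\<lambda>v. x (?tr v)"
    have yt: "?y \<in> tor (V1 N lam)" using x trV by (auto simp: Om1_def tor_def)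
    have yd: "?y (TV k (fst q)) \<noteq> ?y (TV k (snd q))" if k: "k \<in> {1..N-1}" and q: "q \<in> offd (lamsum lam k)" for k q
    proof -
      have p: "\<rho> k permutes {1..lamsum lam k}" by (rule \<rho>perm[OF k])
      have q': "(\<rho> k (fst q), \<rho> k (snd q)) \<in> offd (lamsum lam k)"
        using q permutes_in_image[OF p, of "fst q"] permutes_in_image[OF p, of "snd q"] permutes_inj[OF p]
        by (auto simp: offd_def dest: injD)
      have "\<forall>q\<in>offd (lamsum lam k). x (TV k (fst q)) \<noteq> x (TV k (snd q))" using x k unfolding Om1_def by blast
      from bspec[OF this q'] show ?thesis by (simp add: trTV)
    qed
    have y: "?y \<in> Om1 N lam" using yt yd unfolding Om1_def by blast
    have W: "W_fun N lam I (\<lambda>k c. ?y (TV k c)) (\<lambda>c. ?y (ZV c)) (?y HV) = W_fun N lam I (\<lambda>k c. x (TV k c)) (\<lambda>c. x (ZV c)) (x HV)"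
      using W_fun_sym[OF \<rho>, where t = "\<lambda>k c. x (TV k c)" and I = I and z = "\<lambda>c. x (ZV c)" and h = "x HV"] by (simp add: trTV trZ)
    have D: "Dl N lam ?y = Dl N lam x" unfolding Dl_def trTV
    proof (rule prod.cong[OF refl])
      fix k assume k: "k \<in> {1..N-1}"
      show "(\<Prod>q\<in>offd (lamsum lam k). x (TV k (\<rho> k (fst q))) - x (TV k (\<rho> k (snd q)))) =
            (\<Prod>q\<in>offd (lamsum lam k). x (TV k (fst q)) - x (TV k (snd q)))"
        by (rule offd_reindex[OF \<rho>perm[OF k], of "\<lambda>a b. x (TV k a) - x (TV k b)"])
    qed
    show "G1 N lam I ?y = G1 N lam I x" using G1_eq[OF y, of I] G1_eq[OF x, of I] W D by simp
  qed
  obtain c :: "var \<Rightarrow> nat" where c: "inj_on c (V1 N lam)"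
    using finite_imp_inj_to_nat_seg[OF finite_V1] by blast
  have l1: "lau (V1 N lam) (\<lambda>x. G1 N lam I (\<lambda>v. x (?tr v)))"
    by (rule lau_subst[OF finite_V1 finite_V1 trV lau_G1])
  show ?thesis
  proof (rule lau_dense[OF finite_V1 c l1 lau_G1 finite_SO SO_props])
    show "\<forall>x\<in>tor (V1 N lam). (\<forall>q\<in>SO N lam. x (fst q) \<noteq> x (snd q)) \<longrightarrow> G1 N lam I (\<lambda>v. x (?tr v)) = G1 N lam I x"
      using om Om1_iff by blast
  qed
qed

lemma S1_prod:
  "(\<Prod>s\<in>S1 N lam. f (fst s) (snd s)) = (\<Prod>k\<in>{1..N-1}. \<Prod>q\<in>ltp (lamsum lam k). f (TV k (fst q)) (TV k (snd q)))"
proof -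
  have inj: "inj_on (\<lambda>p. (TV (fst p) (fst (snd p)), TV (fst p) (snd (snd p)))) (SIGMA k:{1..N-1}. ltp (lamsum lam k))"
    by (auto simp: inj_on_def)
  have "(\<Prod>s\<in>S1 N lam. f (fst s) (snd s)) = (\<Prod>p\<in>(SIGMA k:{1..N-1}. ltp (lamsum lam k)). f (TV (fst p) (fst (snd p))) (TV (fst p) (snd (snd p))))"
    unfolding S1_def by (subst prod.reindex[OF inj]) simp
  also have "\<dots> = (\<Prod>k\<in>{1..N-1}. \<Prod>q\<in>ltp (lamsum lam k). f (TV k (fst q)) (TV k (snd q)))"
    using prod.Sigma[of "{1..N-1}" "\<lambda>k. ltp (lamsum lam k)" "\<lambda>k q. f (TV k (fst q)) (TV k (snd q))"]
    by (simp add: finite_ltp split_beta)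
  finally show ?thesis .
qed

lemma Dl_S1:
  "Dl N lam x = (\<Prod>k\<in>{1..N-1}. \<Prod>q\<in>ltp (lamsum lam k). (-1::complex)) * (\<Prod>s\<in>S1 N lam. (x (fst s) - x (snd s))^2)"
proof -
  have "Dl N lam x = (\<Prod>k\<in>{1..N-1}. \<Prod>q\<in>ltp (lamsum lam k). (-1) * (x (TV k (fst q)) - x (TV k (snd q)))^2)"
    unfolding Dl_def
  proof (rule prod.cong[OF refl])
    fix k
    show "(\<Prod>q\<in>offd (lamsum lam k). x (TV k (fst q)) - x (TV k (snd q))) =
          (\<Prod>q\<in>ltp (lamsum lam k). (-1) * (x (TV k (fst q)) - x (TV k (snd q)))^2)"
      using offd_ltp[of "\<lambda>a b. x (TV k a) - x (TV k b)" "lamsum lam k"]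
      by (simp add: power2_eq_square algebra_simps)
  qed
  also have "\<dots> = (\<Prod>k\<in>{1..N-1}. \<Prod>q\<in>ltp (lamsum lam k). (-1::complex)) *
      (\<Prod>k\<in>{1..N-1}. \<Prod>q\<in>ltp (lamsum lam k). (x (TV k (fst q)) - x (TV k (snd q)))^2)"
    by (simp only: prod.distrib)
  also have "(\<Prod>k\<in>{1..N-1}. \<Prod>q\<in>ltp (lamsum lam k). (x (TV k (fst q)) - x (TV k (snd q)))^2)
      = (\<Prod>s\<in>S1 N lam. (x (fst s) - x (snd s))^2)"
    using S1_prod[of "\<lambda>u v. (x u - x v)^2" N lam] by simp
  finally show ?thesis .
qed

theorem part1:
  "\<exists>L. lau (V1 N lam) L \<and> (\<forall>x\<in>Om1 N lam. W_fun N lam I (\<lambda>k a. x (TV k a)) (\<lambda>c. x (ZV c)) (x HV) = L x)"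
proof -
  obtain c :: "var \<Rightarrow> nat" where c: "inj_on c (V1 N lam)"
    using finite_imp_inj_to_nat_seg[OF finite_V1] by blast
  have pv: "\<forall>s\<in>S1 N lam. \<exists>R. lau (V1 N lam) R \<and> (\<forall>x\<in>tor (V1 N lam). G1 N lam I x = (x (fst s) - x (snd s))^2 * R x)"
  proof
    fix s assume "s \<in> S1 N lam"
    then obtain k a b where s: "s = (TV k a, TV k b)" and k: "k \<in> {1..N-1}" and ab: "(a,b) \<in> ltp (lamsum lam k)"
      unfolding S1_def by force
    have ab': "a \<in> {1..lamsum lam k}" "b \<in> {1..lamsum lam k}" "a \<noteq> b" using ab by (auto simp: ltp_def)
    have inV: "TV k a \<in> V1 N lam" "TV k b \<in> V1 N lam" using k ab' by (auto simp: TV_in_V1)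
    have q: "(a,b) \<in> offd (lamsum lam k)" using ab' by (simp add: offd_def)
    have van: "\<forall>x\<in>tor (V1 N lam). x (TV k a) = x (TV k b) \<longrightarrow> G1 N lam I x = 0"
      using G1_vanish[OF k q] by simp
    show "\<exists>R. lau (V1 N lam) R \<and> (\<forall>x\<in>tor (V1 N lam). G1 N lam I x = (x (fst s) - x (snd s))^2 * R x)"
      using lau_pv[OF finite_V1 c inV _ lau_G1 van G1_swap[OF k ab'(1,2)]] ab' s by simp
  qed
  obtain R where R: "lau (V1 N lam) R" "\<forall>x\<in>tor (V1 N lam). G1 N lam I x = (\<Prod>s\<in>S1 N lam. (x (fst s) - x (snd s))^2) * R x"
    using lau_gc[OF finite_V1 c finite_S1 S1_props S1_uniq lau_G1 pv] by blast
  define C where "C = (\<Prod>k\<in>{1..N-1}. \<Prod>q\<in>ltp (lamsum lam k). (-1::complex))"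
  have C0: "C \<noteq> 0" unfolding C_def by (simp add: prod_zero_iff finite_ltp)
  show ?thesis
  proof (intro exI[of _ "\<lambda>x. R x * inverse C"] conjI ballI)
    show "lau (V1 N lam) (\<lambda>x. R x * inverse C)" by (rule lau_mult[OF R(1) lau_const])
    fix x assume x: "x \<in> Om1 N lam"
    let ?P = "\<Prod>s\<in>S1 N lam. (x (fst s) - x (snd s))^2"
    have P0: "?P \<noteq> 0"
    proof -
      have "\<forall>s\<in>S1 N lam. x (fst s) \<noteq> x (snd s)"
        using x unfolding S1_def Om1_def ltp_def offd_def by force
      then show ?thesis by (simp add: prod_zero_iff finite_S1)
    qed
    have "W_fun N lam I (\<lambda>k a. x (TV k a)) (\<lambda>c. x (ZV c)) (x HV) * (C * ?P) = ?P * R x"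
      using G1_eq[OF x, of I] R(2) x Dl_S1[of N lam x] unfolding C_def Om1_def by auto
    then show "W_fun N lam I (\<lambda>k a. x (TV k a)) (\<lambda>c. x (ZV c)) (x HV) = R x * inverse C"
      using P0 C0 by (simp add: field_simps)
  qed
qed


definition UU :: "(nat \<Rightarrow> nat set) \<Rightarrow> nat \<Rightarrow> nat set" where
  "UU I k = (\<Union>i\<in>{1..k}. I i)"

lemma pidx_UU: "pidx I k a = sorted_list_of_set (UU I k) ! (a - 1)"
  by (simp add: pidx_def UU_def)

context
  fixes N n :: nat and lam :: "nat \<Rightarrow> nat" and I :: "nat \<Rightarrow> nat set"
  assumes op: "ordered_partition N n lam I"
begin

lemma UU_sub: "UU I k \<subseteq> {1..n}"
  unfolding UU_def
proof (rule UN_least)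
  fix i
  show "I i \<subseteq> {1..n}"
    using op unfolding ordered_partition_def by (cases "i \<in> {1..N}") auto
qed

lemma UU_finite: "finite (UU I k)"
  by (rule finite_subset[OF UU_sub]) simp

lemma UU_card: assumes "k \<le> N" shows "card (UU I k) = lamsum lam k"
proof -
  have fin: "\<forall>i\<in>{1..k}. finite (I i)" using UU_finite unfolding UU_def
    by (meson UN_upper finite_subset)
  have dis: "\<forall>i\<in>{1..k}. \<forall>j\<in>{1..k}. i \<noteq> j \<longrightarrow> I i \<inter> I j = {}"
    using op assms unfolding ordered_partition_def by auto
  have "card (UU I k) = (\<Sum>i\<in>{1..k}. card (I i))"
    unfolding UU_def by (rule card_UN_disjoint[OF finite_atLeastAtMost fin dis])
  also have "\<dots> = (\<Sum>i\<in>{1..k}. lam i)"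
    using op assms unfolding ordered_partition_def by (intro sum.cong) auto
  finally show ?thesis by (simp add: lamsum_def)
qed

lemma UU_N: "UU I N = {1..n}"
  using op unfolding ordered_partition_def UU_def by simp

lemma UU_mono: "k \<le> k' \<Longrightarrow> UU I k \<subseteq> UU I k'"
  unfolding UU_def by (rule UN_mono) auto

lemma pidx_in:
  assumes "k \<le> N" "a \<in> {1..lamsum lam k}"
  shows "pidx I k a \<in> UU I k"
proof -
  let ?xs = "sorted_list_of_set (UU I k)"
  have "length ?xs = lamsum lam k" using UU_card[OF assms(1)] by simp
  then have "a - 1 < length ?xs" using assms(2) by auto
  then show ?thesis unfolding pidx_UU using nth_mem UU_finite by (metis set_sorted_list_of_set)
qed

lemma pidx_mono:
  assumes "k \<le> N" "a \<in> {1..lamsum lam k}" "b \<in> {1..lamsum lam k}" "a < b"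
  shows "pidx I k a < pidx I k b"
proof -
  let ?xs = "sorted_list_of_set (UU I k)"
  have "length ?xs = lamsum lam k" using UU_card[OF assms(1)] by simp
  then have "b - 1 < length ?xs" "a - 1 < b - 1" using assms by auto
  then show ?thesis unfolding pidx_UU
    by (intro sorted_wrt_nth_less[of "(<)"]) (auto simp: sorted_list_of_set.strict_sorted_key_list_of_set)
qed

lemma pidx_inj:
  assumes "k \<le> N" "a \<in> {1..lamsum lam k}" "b \<in> {1..lamsum lam k}" "pidx I k a = pidx I k b"
  shows "a = b"
  using pidx_mono[OF assms(1,2,3)] pidx_mono[OF assms(1,3,2)] assms(4) by (metis less_irrefl nat_neq_iff)

lemma pidx_surj:
  assumes "k \<le> N" "x \<in> UU I k"
  shows "\<exists>a\<in>{1..lamsum lam k}. pidx I k a = x"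
proof -
  let ?xs = "sorted_list_of_set (UU I k)"
  have len: "length ?xs = lamsum lam k" using UU_card[OF assms(1)] by simp
  have "x \<in> set ?xs" using assms(2) UU_finite by simp
  then obtain i where i: "i < length ?xs" "?xs ! i = x" by (auto simp: in_set_conv_nth)
  then show ?thesis using len unfolding pidx_UU by (intro bexI[of _ "i+1"]) auto
qed

lemma pidx_bij:
  assumes "k \<le> N"
  shows "bij_betw (pidx I k) {1..lamsum lam k} (UU I k)"
  unfolding bij_betw_def inj_on_def using pidx_in[OF assms] pidx_inj[OF assms] pidx_surj[OF assms] by blast

lemma pidx_N: assumes "c \<in> {1..n}" shows "pidx I N c = c"
proof -
  have "{1..n} = {1..<n+1}" by auto
  then have "sorted_list_of_set (UU I N) = [1..<n+1]" unfolding UU_N by (simp del: upt_Suc)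
  then have "pidx I N c = [1..<n+1] ! (c - 1)" unfolding pidx_UU by simp
  also have "\<dots> = 1 + (c - 1)" using assms by (subst nth_upt) auto
  finally show ?thesis using assms by simp
qed

lemma lamsum_N: "lamsum lam N = n"
  using UU_card[of N] UU_N by simp

end

lemma op_perm:
  assumes op: "ordered_partition N n lam I" and \<sigma>: "\<sigma> permutes {1..n}"
  shows "ordered_partition N n lam (\<lambda>k. inv \<sigma> ` I k)"
proof -
  have isg: "inv \<sigma> permutes {1..n}" by (rule permutes_inv[OF \<sigma>])
  have inj: "inj (inv \<sigma>)" by (rule permutes_inj[OF isg])
  show ?thesis unfolding ordered_partition_def
  proof (intro conjI ballI allI impI)
    fix k assume k: "k \<in> {1..N}"
    have "I k \<subseteq> {1..n}" "card (I k) = lam k" using op k unfolding ordered_partition_def by auto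
    then have h: "I k \<subseteq> {1..n}" "card (I k) = lam k" .
    show "inv \<sigma> ` I k \<subseteq> {1..n}"
      using image_mono[OF h(1), of "inv \<sigma>"] permutes_image[OF isg] by simp
    show "card (inv \<sigma> ` I k) = lam k"
      using card_image[OF inj_on_subset[OF inj, of "I k"]] h(2) by simp
  next
    fix k assume "k \<notin> {1..N}" then show "inv \<sigma> ` I k = {}" using op unfolding ordered_partition_def by auto
  next
    fix k l assume "k \<in> {1..N}" "l \<in> {1..N}" "k \<noteq> l"
    then show "inv \<sigma> ` I k \<inter> inv \<sigma> ` I l = {}" using op inj unfolding ordered_partition_def
      by (simp add: image_Int[symmetric])
  next
    have "(\<Union>k\<in>{1..N}. inv \<sigma> ` I k) = inv \<sigma> ` (\<Union>k\<in>{1..N}. I k)" by auto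
    also have "\<dots> = inv \<sigma> ` {1..n}" using op unfolding ordered_partition_def by simp
    also have "\<dots> = {1..n}" by (rule permutes_image[OF isg])
    finally show "(\<Union>k\<in>{1..N}. inv \<sigma> ` I k) = {1..n}" .
  qed
qed


definition sJ :: "(nat \<Rightarrow> nat set) \<Rightarrow> (nat \<Rightarrow> nat) \<Rightarrow> var \<Rightarrow> nat" where
  "sJ J \<sigma> v = (case v of TV k a \<Rightarrow> pidx J k a | ZV c \<Rightarrow> \<sigma> c | HV \<Rightarrow> 0)"

definition gz :: "nat \<Rightarrow> (nat \<Rightarrow> nat set) \<Rightarrow> (nat \<Rightarrow> nat) \<Rightarrow> (nat \<Rightarrow> nat \<Rightarrow> nat) \<Rightarrow> nat \<Rightarrow> nat \<Rightarrow> nat" where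
  "gz N J \<sigma> \<pi> k a = sJ J \<sigma> (vT N \<pi> k a)"

lemma gz_simp: "gz N J \<sigma> \<pi> k a = (if k = N then \<sigma> a else pidx J k (\<pi> k a))"
  by (simp add: gz_def sJ_def vT_def)

definition E2 :: "nat \<Rightarrow> (nat \<Rightarrow> nat) \<Rightarrow> (nat \<Rightarrow> nat set) \<Rightarrow> (nat \<Rightarrow> complex) \<Rightarrow> complex" where
  "E2 N lam J y = (\<Prod>k\<in>{1..N-1}. \<Prod>a\<in>{1..lamsum lam k}. \<Prod>b\<in>{1..lamsum lam k}. 1 - y 0 * y (pidx J k b) / y (pidx J k a))"

definition NV :: "nat \<Rightarrow> (nat \<Rightarrow> nat) \<Rightarrow> (nat \<Rightarrow> nat set) \<Rightarrow> (nat \<Rightarrow> nat set) \<Rightarrow> (nat \<Rightarrow> nat) \<Rightarrow> (nat \<Rightarrow> nat \<Rightarrow> nat) \<Rightarrow> bool" where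
  "NV N lam I J \<sigma> \<pi> \<longleftrightarrow> (\<forall>k\<in>{1..N-1}. \<forall>a\<in>{1..lamsum lam k}. \<forall>c\<in>{1..lamsum lam (k+1)}.
      gz N J \<sigma> \<pi> (k+1) c = gz N J \<sigma> \<pi> k a \<longrightarrow> \<not> pidx I k a < pidx I (k+1) c)"

definition cb :: "nat \<Rightarrow> (nat \<Rightarrow> nat) \<Rightarrow> (nat \<Rightarrow> nat set) \<Rightarrow> (nat \<Rightarrow> nat) \<Rightarrow> (nat \<Rightarrow> nat \<Rightarrow> nat) \<Rightarrow> nat \<Rightarrow> nat \<Rightarrow> nat" where
  "cb N lam J \<sigma> \<pi> k b = inv_into {1..lamsum lam (k+1)} (gz N J \<sigma> \<pi> (k+1)) (gz N J \<sigma> \<pi> k b)"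

definition Sp :: "nat \<Rightarrow> (nat \<Rightarrow> nat) \<Rightarrow> (nat \<Rightarrow> nat set) \<Rightarrow> (nat \<Rightarrow> nat set) \<Rightarrow> (nat \<Rightarrow> nat) \<Rightarrow> (nat \<Rightarrow> nat \<Rightarrow> nat) \<Rightarrow> (nat \<Rightarrow> complex) \<Rightarrow> complex" where
  "Sp N lam I J \<sigma> \<pi> y = (\<Prod>k\<in>{1..N-1}. \<Prod>a\<in>{1..lamsum lam k}.
     (\<Prod>c\<in>{c\<in>{1..lamsum lam (k+1)}. pidx I (k+1) c < pidx I k a} - cb N lam J \<sigma> \<pi> k ` {1..a-1}.
         1 - y 0 * y (gz N J \<sigma> \<pi> (k+1) c) / y (gz N J \<sigma> \<pi> k a)) *
     (\<Prod>c\<in>{c\<in>{1..lamsum lam (k+1)}. pidx I (k+1) c > pidx I k a}. 1 - y (gz N J \<sigma> \<pi> (k+1) c) / y (gz N J \<sigma> \<pi> k a)) *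
     y (gz N J \<sigma> \<pi> k a) ^ (lamsum lam k - a) *
     (\<Prod>b\<in>{1..a-1}. y (gz N J \<sigma> \<pi> k a) - y (gz N J \<sigma> \<pi> k b)))"

lemma Gt_sJ:
  "Gt N lam I \<pi> (\<lambda>v. y (sJ J \<sigma> v)) = (\<Prod>k\<in>{1..N-1}. \<Prod>a\<in>{1..lamsum lam k}.
     (\<Prod>c\<in>{c\<in>{1..lamsum lam (k+1)}. pidx I (k+1) c < pidx I k a}. 1 - y 0 * y (gz N J \<sigma> \<pi> (k+1) c) / y (gz N J \<sigma> \<pi> k a)) *
     (\<Prod>c\<in>{c\<in>{1..lamsum lam (k+1)}. pidx I (k+1) c > pidx I k a}. 1 - y (gz N J \<sigma> \<pi> (k+1) c) / y (gz N J \<sigma> \<pi> k a)) *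
     (\<Prod>b\<in>{a+1..lamsum lam k}. y (gz N J \<sigma> \<pi> k a) - y 0 * y (gz N J \<sigma> \<pi> k b)) *
     (\<Prod>b\<in>{1..a-1}. y (gz N J \<sigma> \<pi> k a) - y (gz N J \<sigma> \<pi> k b)))"
proof -
  have h: "sJ J \<sigma> HV = 0" by (simp add: sJ_def)
  show ?thesis unfolding Gt_def gz_def[symmetric] h ..
qed

context
  fixes N n :: nat and lam :: "nat \<Rightarrow> nat" and I J :: "nat \<Rightarrow> nat set" and \<sigma> :: "nat \<Rightarrow> nat"
  assumes opI: "ordered_partition N n lam I" and opJ: "ordered_partition N n lam J"
    and \<sigma>: "\<sigma> permutes {1..n}"
begin

lemma gz_bij:
  assumes \<pi>: "\<pi> \<in> sym_perms N lam" and k: "k \<in> {1..N}"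
  shows "bij_betw (gz N J \<sigma> \<pi> k) {1..lamsum lam k} (UU J k)"
proof (cases "k = N")
  case True
  have "bij_betw \<sigma> {1..n} {1..n}" by (rule permutes_imp_bij[OF \<sigma>])
  moreover have "gz N J \<sigma> \<pi> k = \<sigma>" using True by (simp add: gz_simp fun_eq_iff)
  ultimately show ?thesis using True lamsum_N[OF opJ] UU_N[OF opJ] by simp
next
  case False
  then have k': "k \<in> {1..N-1}" using k by auto
  have "bij_betw (\<pi> k) {1..lamsum lam k} {1..lamsum lam k}" by (rule permutes_imp_bij[OF sym_permsD[OF \<pi> k']])
  moreover have "bij_betw (pidx J k) {1..lamsum lam k} (UU J k)" using pidx_bij[OF opJ] k by auto
  ultimately have "bij_betw (pidx J k \<circ> \<pi> k) {1..lamsum lam k} (UU J k)" by (rule bij_betw_trans)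
  moreover have "gz N J \<sigma> \<pi> k = pidx J k \<circ> \<pi> k" using False by (simp add: gz_simp fun_eq_iff)
  ultimately show ?thesis by simp
qed

lemma gz_in:
  assumes \<pi>: "\<pi> \<in> sym_perms N lam" and k: "k \<in> {1..N}" and a: "a \<in> {1..lamsum lam k}"
  shows "gz N J \<sigma> \<pi> k a \<in> {1..n}"
  using bij_betwE[OF gz_bij[OF \<pi> k]] a UU_sub[OF opJ] by blast

lemma gz_inj:
  assumes \<pi>: "\<pi> \<in> sym_perms N lam" and k: "k \<in> {1..N}" and a: "a \<in> {1..lamsum lam k}"
    and b: "b \<in> {1..lamsum lam k}" and e: "gz N J \<sigma> \<pi> k a = gz N J \<sigma> \<pi> k b"
  shows "a = b"
  using bij_betw_imp_inj_on[OF gz_bij[OF \<pi> k]] a b e by (auto dest: inj_onD)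

lemma cb_props:
  assumes \<pi>: "\<pi> \<in> sym_perms N lam" and k: "k \<in> {1..N-1}" and b: "b \<in> {1..lamsum lam k}"
  shows "cb N lam J \<sigma> \<pi> k b \<in> {1..lamsum lam (k+1)}"
    and "gz N J \<sigma> \<pi> (k+1) (cb N lam J \<sigma> \<pi> k b) = gz N J \<sigma> \<pi> k b"
proof -
  have k1: "k \<in> {1..N}" "k+1 \<in> {1..N}" using k by auto
  have "gz N J \<sigma> \<pi> k b \<in> UU J k" using bij_betwE[OF gz_bij[OF \<pi> k1(1)]] b by blast
  also have "UU J k \<subseteq> UU J (k+1)" by (rule UU_mono[OF opJ]) simp
  also have "UU J (k+1) = gz N J \<sigma> \<pi> (k+1) ` {1..lamsum lam (k+1)}"
    using bij_betw_imp_surj_on[OF gz_bij[OF \<pi> k1(2)]] by simp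
  finally have m: "gz N J \<sigma> \<pi> k b \<in> gz N J \<sigma> \<pi> (k+1) ` {1..lamsum lam (k+1)}" .
  show "cb N lam J \<sigma> \<pi> k b \<in> {1..lamsum lam (k+1)}" unfolding cb_def by (rule inv_into_into[OF m])
  show "gz N J \<sigma> \<pi> (k+1) (cb N lam J \<sigma> \<pi> k b) = gz N J \<sigma> \<pi> k b" unfolding cb_def by (rule f_inv_into_f[OF m])
qed

lemma term_zero:
  assumes \<pi>: "\<pi> \<in> sym_perms N lam" and nv: "\<not> NV N lam I J \<sigma> \<pi>" and y: "y \<in> tor {0..n}"
  shows "Gt N lam I \<pi> (\<lambda>v. y (sJ J \<sigma> v)) = 0"
proof -
  obtain k a c where k: "k \<in> {1..N-1}" and a: "a \<in> {1..lamsum lam k}" and c: "c \<in> {1..lamsum lam (k+1)}"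
    and e: "gz N J \<sigma> \<pi> (k+1) c = gz N J \<sigma> \<pi> k a" and lt: "pidx I k a < pidx I (k+1) c"
    using nv unfolding NV_def by blast
  have k1: "k \<in> {1..N}" using k by auto
  have "y (gz N J \<sigma> \<pi> k a) \<noteq> 0" using gz_in[OF \<pi> k1 a] y by (auto simp: tor_def)
  then have "1 - y (gz N J \<sigma> \<pi> (k+1) c) / y (gz N J \<sigma> \<pi> k a) = 0" using e by simp
  then have z1: "(\<Prod>c\<in>{c\<in>{1..lamsum lam (k+1)}. pidx I (k+1) c > pidx I k a}. 1 - y (gz N J \<sigma> \<pi> (k+1) c) / y (gz N J \<sigma> \<pi> k a)) = 0"
    by (intro prod_zero) (use c lt in auto)
  have z2: "(\<Prod>a\<in>{1..lamsum lam k}.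
     (\<Prod>c\<in>{c\<in>{1..lamsum lam (k+1)}. pidx I (k+1) c < pidx I k a}. 1 - y 0 * y (gz N J \<sigma> \<pi> (k+1) c) / y (gz N J \<sigma> \<pi> k a)) *
     (\<Prod>c\<in>{c\<in>{1..lamsum lam (k+1)}. pidx I (k+1) c > pidx I k a}. 1 - y (gz N J \<sigma> \<pi> (k+1) c) / y (gz N J \<sigma> \<pi> k a)) *
     (\<Prod>b\<in>{a+1..lamsum lam k}. y (gz N J \<sigma> \<pi> k a) - y 0 * y (gz N J \<sigma> \<pi> k b)) *
     (\<Prod>b\<in>{1..a-1}. y (gz N J \<sigma> \<pi> k a) - y (gz N J \<sigma> \<pi> k b))) = 0"
    by (rule prod_zero[OF finite_atLeastAtMost], rule bexI[where x=a]) (use z1 a in simp_all)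
  show ?thesis unfolding Gt_sJ
    by (rule prod_zero[OF finite_atLeastAtMost], rule bexI[where x=k]) (use z2 k in simp_all)
qed

lemma ka_factor:
  assumes \<pi>: "\<pi> \<in> sym_perms N lam" and nv: "NV N lam I J \<sigma> \<pi>" and y: "y \<in> tor {0..n}"
    and k: "k \<in> {1..N-1}" and a: "a \<in> {1..lamsum lam k}"
  shows "(1 - y 0) * ((\<Prod>c\<in>{c\<in>{1..lamsum lam (k+1)}. pidx I (k+1) c < pidx I k a}. 1 - y 0 * y (gz N J \<sigma> \<pi> (k+1) c) / y (gz N J \<sigma> \<pi> k a)) *
     (\<Prod>c\<in>{c\<in>{1..lamsum lam (k+1)}. pidx I (k+1) c > pidx I k a}. 1 - y (gz N J \<sigma> \<pi> (k+1) c) / y (gz N J \<sigma> \<pi> k a)) *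
     (\<Prod>b\<in>{a+1..lamsum lam k}. y (gz N J \<sigma> \<pi> k a) - y 0 * y (gz N J \<sigma> \<pi> k b)) *
     (\<Prod>b\<in>{1..a-1}. y (gz N J \<sigma> \<pi> k a) - y (gz N J \<sigma> \<pi> k b)))
   = (\<Prod>b\<in>{1..lamsum lam k}. 1 - y 0 * y (gz N J \<sigma> \<pi> k b) / y (gz N J \<sigma> \<pi> k a)) *
     ((\<Prod>c\<in>{c\<in>{1..lamsum lam (k+1)}. pidx I (k+1) c < pidx I k a} - cb N lam J \<sigma> \<pi> k ` {1..a-1}.
         1 - y 0 * y (gz N J \<sigma> \<pi> (k+1) c) / y (gz N J \<sigma> \<pi> k a)) *
     (\<Prod>c\<in>{c\<in>{1..lamsum lam (k+1)}. pidx I (k+1) c > pidx I k a}. 1 - y (gz N J \<sigma> \<pi> (k+1) c) / y (gz N J \<sigma> \<pi> k a)) *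
     y (gz N J \<sigma> \<pi> k a) ^ (lamsum lam k - a) *
     (\<Prod>b\<in>{1..a-1}. y (gz N J \<sigma> \<pi> k a) - y (gz N J \<sigma> \<pi> k b)))"
proof -
  let ?Y = "\<lambda>b. y (gz N J \<sigma> \<pi> k b)"
  let ?h = "y 0"
  let ?cb = "cb N lam J \<sigma> \<pi> k"
  let ?Cl = "{c\<in>{1..lamsum lam (k+1)}. pidx I (k+1) c < pidx I k a}"
  let ?f = "\<lambda>c. 1 - ?h * y (gz N J \<sigma> \<pi> (k+1) c) / ?Y a"
  let ?P2 = "\<Prod>c\<in>{c\<in>{1..lamsum lam (k+1)}. pidx I (k+1) c > pidx I k a}. 1 - y (gz N J \<sigma> \<pi> (k+1) c) / ?Y a"
  let ?D = "\<Prod>b\<in>{1..a-1}. ?Y a - ?Y b"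
  have k1: "k \<in> {1..N}" "k \<le> N" "k+1 \<le> N" using k by auto
  have Ya: "?Y a \<noteq> 0" using gz_in[OF \<pi> k1(1) a] y by (auto simp: tor_def)
  have sub: "?cb ` {1..a-1} \<subseteq> ?Cl"
  proof
    fix c assume "c \<in> ?cb ` {1..a-1}"
    then obtain b where b: "b \<in> {1..a-1}" and c: "c = ?cb b" by blast
    have b': "b \<in> {1..lamsum lam k}" using b a by auto
    have cin: "?cb b \<in> {1..lamsum lam (k+1)}" and ge: "gz N J \<sigma> \<pi> (k+1) (?cb b) = gz N J \<sigma> \<pi> k b"
      using cb_props[OF \<pi> k b'] by auto
    have "\<not> pidx I k b < pidx I (k+1) (?cb b)" using nv k b' cin ge unfolding NV_def by blast
    moreover have "pidx I k b < pidx I k a" using pidx_mono[OF opI k1(2) b' a] b by auto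
    ultimately show "c \<in> ?Cl" using c cin by auto
  qed
  have injcb: "inj_on ?cb {1..a-1}"
  proof (rule inj_onI)
    fix b b' assume b: "b \<in> {1..a-1}" and b': "b' \<in> {1..a-1}" and e: "?cb b = ?cb b'"
    have bb: "b \<in> {1..lamsum lam k}" "b' \<in> {1..lamsum lam k}" using b b' a by auto
    have "gz N J \<sigma> \<pi> k b = gz N J \<sigma> \<pi> k b'" using cb_props(2)[OF \<pi> k bb(1)] cb_props(2)[OF \<pi> k bb(2)] e by metis
    then show "b = b'" by (rule gz_inj[OF \<pi> k1(1) bb])
  qed
  have P1: "(\<Prod>c\<in>?Cl. ?f c) = (\<Prod>c\<in>?Cl - ?cb ` {1..a-1}. ?f c) * (\<Prod>b\<in>{1..a-1}. 1 - ?h * ?Y b / ?Y a)"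
  proof -
    have "(\<Prod>c\<in>?Cl. ?f c) = (\<Prod>c\<in>?Cl - ?cb ` {1..a-1}. ?f c) * (\<Prod>c\<in>?cb ` {1..a-1}. ?f c)"
      by (rule prod.subset_diff[OF sub]) simp
    also have "(\<Prod>c\<in>?cb ` {1..a-1}. ?f c) = (\<Prod>b\<in>{1..a-1}. ?f (?cb b))"
      using prod.reindex[OF injcb, of ?f] by simp
    also have "\<dots> = (\<Prod>b\<in>{1..a-1}. 1 - ?h * ?Y b / ?Y a)"
    proof (rule prod.cong[OF refl])
      fix b assume "b \<in> {1..a-1}"
      then have b': "b \<in> {1..lamsum lam k}" using a by auto
      show "?f (?cb b) = 1 - ?h * ?Y b / ?Y a" using cb_props(2)[OF \<pi> k b'] by simp
    qed
    finally show ?thesis .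
  qed
  have C: "(\<Prod>b\<in>{a+1..lamsum lam k}. ?Y a - ?h * ?Y b) = ?Y a ^ (lamsum lam k - a) * (\<Prod>b\<in>{a+1..lamsum lam k}. 1 - ?h * ?Y b / ?Y a)"
  proof -
    have "(\<Prod>b\<in>{a+1..lamsum lam k}. ?Y a - ?h * ?Y b) = (\<Prod>b\<in>{a+1..lamsum lam k}. ?Y a * (1 - ?h * ?Y b / ?Y a))"
      using Ya by (intro prod.cong refl) (simp add: field_simps)
    also have "\<dots> = ?Y a ^ (lamsum lam k - a) * (\<Prod>b\<in>{a+1..lamsum lam k}. 1 - ?h * ?Y b / ?Y a)"
      by (simp add: prod.distrib)
    finally show ?thesis .
  qed
  have E: "(\<Prod>b\<in>{1..lamsum lam k}. 1 - ?h * ?Y b / ?Y a) = (1 - ?h) * (\<Prod>b\<in>{a+1..lamsum lam k}. 1 - ?h * ?Y b / ?Y a) * (\<Prod>b\<in>{1..a-1}. 1 - ?h * ?Y b / ?Y a)"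
  proof -
    have eqs: "{1..lamsum lam k} = insert a ({a+1..lamsum lam k} \<union> {1..a-1})" using a by auto
    have "(\<Prod>b\<in>{1..lamsum lam k}. 1 - ?h * ?Y b / ?Y a) = (\<Prod>b\<in>insert a ({a+1..lamsum lam k} \<union> {1..a-1}). 1 - ?h * ?Y b / ?Y a)"
      by (simp only: eqs)
    also have "\<dots> = (1 - ?h * ?Y a / ?Y a) * (\<Prod>b\<in>{a+1..lamsum lam k} \<union> {1..a-1}. 1 - ?h * ?Y b / ?Y a)"
      by (rule prod.insert) auto
    also have "(\<Prod>b\<in>{a+1..lamsum lam k} \<union> {1..a-1}. 1 - ?h * ?Y b / ?Y a) = (\<Prod>b\<in>{a+1..lamsum lam k}. 1 - ?h * ?Y b / ?Y a) * (\<Prod>b\<in>{1..a-1}. 1 - ?h * ?Y b / ?Y a)"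
      by (rule prod.union_disjoint) auto
    finally show ?thesis using Ya by (simp add: mult.assoc)
  qed
  show ?thesis unfolding P1 C E by (simp add: ac_simps)
qed

lemma E2_perm:
  assumes \<pi>: "\<pi> \<in> sym_perms N lam"
  shows "E2 N lam J y = (\<Prod>k\<in>{1..N-1}. \<Prod>a\<in>{1..lamsum lam k}. \<Prod>b\<in>{1..lamsum lam k}.
            1 - y 0 * y (gz N J \<sigma> \<pi> k b) / y (gz N J \<sigma> \<pi> k a))"
  unfolding E2_def
proof (rule prod.cong[OF refl])
  fix k assume k: "k \<in> {1..N-1}"
  have p: "bij_betw (\<pi> k) {1..lamsum lam k} {1..lamsum lam k}" by (rule permutes_imp_bij[OF sym_permsD[OF \<pi> k]])
  let ?F = "\<lambda>u v. 1 - y 0 * y (pidx J k v) / y (pidx J k u)"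
  have "k \<noteq> N" using k by auto
  have "(\<Prod>a\<in>{1..lamsum lam k}. \<Prod>b\<in>{1..lamsum lam k}. ?F a b) = (\<Prod>a\<in>{1..lamsum lam k}. \<Prod>b\<in>{1..lamsum lam k}. ?F (\<pi> k a) b)"
    using prod.reindex_bij_betw[OF p, of "\<lambda>a. \<Prod>b\<in>{1..lamsum lam k}. ?F a b"] by simp
  also have "\<dots> = (\<Prod>a\<in>{1..lamsum lam k}. \<Prod>b\<in>{1..lamsum lam k}. ?F (\<pi> k a) (\<pi> k b))"
  proof (rule prod.cong[OF refl])
    fix a
    show "(\<Prod>b\<in>{1..lamsum lam k}. ?F (\<pi> k a) b) = (\<Prod>b\<in>{1..lamsum lam k}. ?F (\<pi> k a) (\<pi> k b))"
      using prod.reindex_bij_betw[OF p, of "\<lambda>b. ?F (\<pi> k a) b"] by simp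
  qed
  finally show "(\<Prod>a\<in>{1..lamsum lam k}. \<Prod>b\<in>{1..lamsum lam k}. ?F a b) = (\<Prod>a\<in>{1..lamsum lam k}. \<Prod>b\<in>{1..lamsum lam k}.
            1 - y 0 * y (gz N J \<sigma> \<pi> k b) / y (gz N J \<sigma> \<pi> k a))"
    using k by (simp add: gz_simp \<open>k \<noteq> N\<close>)
qed

lemma term_factor:
  assumes \<pi>: "\<pi> \<in> sym_perms N lam" and nv: "NV N lam I J \<sigma> \<pi>" and y: "y \<in> tor {0..n}"
  shows "(1 - y 0) ^ (\<Sum>k=1..N-1. lamsum lam k) * Gt N lam I \<pi> (\<lambda>v. y (sJ J \<sigma> v)) = E2 N lam J y * Sp N lam I J \<sigma> \<pi> y"
proof -
  have pw: "(1 - y 0) ^ (\<Sum>k=1..N-1. lamsum lam k) = (\<Prod>k\<in>{1..N-1}. \<Prod>a\<in>{1..lamsum lam k}. (1 - y 0))"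
    by (simp add: power_sum)
  show ?thesis unfolding pw Gt_sJ E2_perm[OF \<pi>] Sp_def prod.distrib[symmetric]
    by (intro prod.cong refl) (rule ka_factor[OF \<pi> nv y]; simp)
qed

end


lemma W_cong:
  assumes t: "\<forall>k\<in>{1..N-1}. \<forall>a\<in>{1..lamsum lam k}. t k a = t' k a"
    and z: "\<forall>c\<in>{1..lamsum lam N}. z c = z' c"
  shows "W_fun N lam I t z h = W_fun N lam I t' z' h"
  unfolding W_fun_def
proof (intro arg_cong2[where f = "(*)"] refl sum.cong)
  fix \<pi> assume \<pi>: "\<pi> \<in> sym_perms N lam"
  have e: "tvar N (\<lambda>k a. t k (\<pi> k a)) z k a = tvar N (\<lambda>k a. t' k (\<pi> k a)) z' k a"
    if k: "k \<in> {1..N}" and a: "a \<in> {1..lamsum lam k}" for k a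
  proof (cases "k = N")
    case True then show ?thesis using z a by (simp add: tvar_def)
  next
    case False
    then have k': "k \<in> {1..N-1}" using k by auto
    have "\<pi> k a \<in> {1..lamsum lam k}" using permutes_in_image[OF sym_permsD[OF \<pi> k'], of a] a by blast
    then show ?thesis using False t k' by (simp add: tvar_def)
  qed
  show "U_fun N lam I (\<lambda>k a. t k (\<pi> k a)) z h = U_fun N lam I (\<lambda>k a. t' k (\<pi> k a)) z' h"
    unfolding U_fun_def
    by (intro prod.cong refl arg_cong2[where f="(*)"] arg_cong2[where f="(-)"] arg_cong2[where f="(/)"] e) auto
qed

definition AJ :: "nat \<Rightarrow> (nat \<Rightarrow> nat) \<Rightarrow> (nat \<times> nat \<times> nat) set" where
  "AJ N lam = (SIGMA k:{1..N-1}. offd (lamsum lam k))"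
definition DlJ :: "nat \<Rightarrow> (nat \<Rightarrow> nat) \<Rightarrow> (nat \<Rightarrow> nat set) \<Rightarrow> (nat \<Rightarrow> complex) \<Rightarrow> complex" where
  "DlJ N lam J y = (\<Prod>i\<in>AJ N lam. y (pidx J (fst i) (fst (snd i))) - y (pidx J (fst i) (snd (snd i))))"
definition Stot :: "nat \<Rightarrow> (nat \<Rightarrow> nat) \<Rightarrow> (nat \<Rightarrow> nat set) \<Rightarrow> (nat \<Rightarrow> nat set) \<Rightarrow> (nat \<Rightarrow> nat) \<Rightarrow> (nat \<Rightarrow> complex) \<Rightarrow> complex" where
  "Stot N lam I J \<sigma> y = (\<Sum>\<pi>\<in>sym_perms N lam. if NV N lam I J \<sigma> \<pi> then Sp N lam I J \<sigma> \<pi> y else 0)"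

lemma finite_AJ: "finite (AJ N lam)"
  unfolding AJ_def by (intro finite_SigmaI finite_offd) auto

context
  fixes N n :: nat and lam :: "nat \<Rightarrow> nat" and I J :: "nat \<Rightarrow> nat set" and \<sigma> :: "nat \<Rightarrow> nat"
  assumes opI: "ordered_partition N n lam I" and opJ: "ordered_partition N n lam J"
    and \<sigma>: "\<sigma> permutes {1..n}"
begin

lemma pJ_in: assumes k: "k \<in> {1..N-1}" and a: "a \<in> {1..lamsum lam k}" shows "pidx J k a \<in> {1..n}"
proof -
  have "pidx J k a \<in> UU J k" by (rule pidx_in[OF opJ]) (use k a in auto)
  then show ?thesis using UU_sub[OF opJ, of k] by blast
qed

lemma lau_E2: "lau {0..n} (E2 N lam J)"
  unfolding E2_def[abs_def]
proof (rule lau_prod, rule lau_prod, rule lau_prod)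
  fix k a b assume k: "k \<in> {1..N-1}" and a: "a \<in> {1..lamsum lam k}" and b: "b \<in> {1..lamsum lam k}"
  have ia: "pidx J k a \<in> {0..n}" and ib: "pidx J k b \<in> {0..n}" using pJ_in[OF k a] pJ_in[OF k b] by auto
  show "lau {0..n} (\<lambda>x. 1 - x 0 * x (pidx J k b) / x (pidx J k a))"
    by (rule lau_diff[OF lau_const lau_div_var[OF _ ia lau_mult[OF lau_var lau_var]]]) (use ib in auto)
qed

lemma lau_Sp:
  assumes \<pi>: "\<pi> \<in> sym_perms N lam"
  shows "lau {0..n} (Sp N lam I J \<sigma> \<pi>)"
  unfolding Sp_def[abs_def]
proof (rule lau_prod, rule lau_prod)
  fix k a assume k: "k \<in> {1..N-1}" and a: "a \<in> {1..lamsum lam k}"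
  have k1: "k \<in> {1..N}" "k+1 \<in> {1..N}" using k by auto
  have gi: "gz N J \<sigma> \<pi> k' c \<in> {0..n}" if "k' \<in> {1..N}" "c \<in> {1..lamsum lam k'}" for k' c
    using gz_in[OF opI opJ \<sigma> \<pi> that] by auto
  have lv: "lau {0..n} (\<lambda>x. x (gz N J \<sigma> \<pi> k' c))" if "k' \<in> {1..N}" "c \<in> {1..lamsum lam k'}" for k' c
    by (rule lau_var[OF _ gi[OF that]]) simp
  have l0: "lau {0..n} (\<lambda>x. x 0)" by (rule lau_var) auto
  have A: "lau {0..n} (\<lambda>x. \<Prod>c\<in>{c\<in>{1..lamsum lam (k+1)}. pidx I (k+1) c < pidx I k a} - cb N lam J \<sigma> \<pi> k ` {1..a-1}.
         1 - x 0 * x (gz N J \<sigma> \<pi> (k+1) c) / x (gz N J \<sigma> \<pi> k a))"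
  proof (rule lau_prod)
    fix c assume "c \<in> {c\<in>{1..lamsum lam (k+1)}. pidx I (k+1) c < pidx I k a} - cb N lam J \<sigma> \<pi> k ` {1..a-1}"
    then have c: "c \<in> {1..lamsum lam (k+1)}" by auto
    show "lau {0..n} (\<lambda>x. 1 - x 0 * x (gz N J \<sigma> \<pi> (k+1) c) / x (gz N J \<sigma> \<pi> k a))"
      by (rule lau_diff[OF lau_const lau_div_var[OF _ gi[OF k1(1) a] lau_mult[OF l0 lv[OF k1(2) c]]]]) simp
  qed
  have B: "lau {0..n} (\<lambda>x. \<Prod>c\<in>{c\<in>{1..lamsum lam (k+1)}. pidx I (k+1) c > pidx I k a}. 1 - x (gz N J \<sigma> \<pi> (k+1) c) / x (gz N J \<sigma> \<pi> k a))"
  proof (rule lau_prod)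
    fix c assume "c \<in> {c\<in>{1..lamsum lam (k+1)}. pidx I (k+1) c > pidx I k a}"
    then have c: "c \<in> {1..lamsum lam (k+1)}" by auto
    show "lau {0..n} (\<lambda>x. 1 - x (gz N J \<sigma> \<pi> (k+1) c) / x (gz N J \<sigma> \<pi> k a))"
      by (rule lau_diff[OF lau_const lau_div_var[OF _ gi[OF k1(1) a] lv[OF k1(2) c]]]) simp
  qed
  have C: "lau {0..n} (\<lambda>x. x (gz N J \<sigma> \<pi> k a) ^ (lamsum lam k - a))"
    by (rule lau_power[OF lv[OF k1(1) a]])
  have D: "lau {0..n} (\<lambda>x. \<Prod>b\<in>{1..a-1}. x (gz N J \<sigma> \<pi> k a) - x (gz N J \<sigma> \<pi> k b))"
  proof (rule lau_prod)
    fix b assume "b \<in> {1..a-1}"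
    then have b: "b \<in> {1..lamsum lam k}" using a by auto
    show "lau {0..n} (\<lambda>x. x (gz N J \<sigma> \<pi> k a) - x (gz N J \<sigma> \<pi> k b))"
      by (rule lau_diff[OF lv[OF k1(1) a] lv[OF k1(1) b]])
  qed
  show "lau {0..n} (\<lambda>x. (\<Prod>c\<in>{c\<in>{1..lamsum lam (k+1)}. pidx I (k+1) c < pidx I k a} - cb N lam J \<sigma> \<pi> k ` {1..a-1}.
         1 - x 0 * x (gz N J \<sigma> \<pi> (k+1) c) / x (gz N J \<sigma> \<pi> k a)) *
     (\<Prod>c\<in>{c\<in>{1..lamsum lam (k+1)}. pidx I (k+1) c > pidx I k a}. 1 - x (gz N J \<sigma> \<pi> (k+1) c) / x (gz N J \<sigma> \<pi> k a)) *
     x (gz N J \<sigma> \<pi> k a) ^ (lamsum lam k - a) *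
     (\<Prod>b\<in>{1..a-1}. x (gz N J \<sigma> \<pi> k a) - x (gz N J \<sigma> \<pi> k b)))"
    by (rule lau_mult[OF lau_mult[OF lau_mult[OF A B] C] D])
qed

lemma lau_Stot: "lau {0..n} (Stot N lam I J \<sigma>)"
  unfolding Stot_def[abs_def]
proof (rule lau_sum)
  fix \<pi> assume \<pi>: "\<pi> \<in> sym_perms N lam"
  show "lau {0..n} (\<lambda>x. if NV N lam I J \<sigma> \<pi> then Sp N lam I J \<sigma> \<pi> x else 0)"
    by (cases "NV N lam I J \<sigma> \<pi>") (simp_all add: lau_Sp[OF \<pi>] lau_const)
qed

lemma AJ_props:
  assumes "i \<in> AJ N lam"
  shows "pidx J (fst i) (fst (snd i)) \<in> {1..n}" "pidx J (fst i) (snd (snd i)) \<in> {1..n}"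
    "pidx J (fst i) (fst (snd i)) \<noteq> pidx J (fst i) (snd (snd i))"
proof -
  have k: "fst i \<in> {1..N-1}" and q: "snd i \<in> offd (lamsum lam (fst i))" using assms by (auto simp: AJ_def)
  have a: "fst (snd i) \<in> {1..lamsum lam (fst i)}" and b: "snd (snd i) \<in> {1..lamsum lam (fst i)}"
    and ab: "fst (snd i) \<noteq> snd (snd i)" using q by (auto simp: offd_def)
  show "pidx J (fst i) (fst (snd i)) \<in> {1..n}" "pidx J (fst i) (snd (snd i)) \<in> {1..n}"
    using pJ_in[OF k a] pJ_in[OF k b] by auto
  show "pidx J (fst i) (fst (snd i)) \<noteq> pidx J (fst i) (snd (snd i))"
    using pidx_inj[OF opJ _ a b] k ab by (metis atLeastAtMost_iff diff_le_self le_trans)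
qed

lemma lau_DlJ: "lau {0..n} (DlJ N lam J)"
  unfolding DlJ_def[abs_def]
  by (rule lau_prod, rule lau_diff; rule lau_var) (use AJ_props in auto)

lemma sJ_V: "v \<in> V1 N lam \<Longrightarrow> sJ J \<sigma> v \<in> {0..n}"
proof (cases v)
  case (TV k a)
  assume "v \<in> V1 N lam"
  then show ?thesis using TV pJ_in by (auto simp: TV_in_V1 sJ_def)
next
  case (ZV c)
  assume "v \<in> V1 N lam"
  then have "c \<in> {1..n}" using ZV lamsum_N[OF opJ] by (simp add: ZV_in_V1)
  then show ?thesis using ZV permutes_in_image[OF \<sigma>, of c] by (auto simp: sJ_def)
next
  case HV then show ?thesis by (simp add: sJ_def)
qed

lemma x_Om1:
  assumes y: "y \<in> tor {0..n}" and inj: "inj_on y {1..n}"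
  shows "(\<lambda>v. y (sJ J \<sigma> v)) \<in> Om1 N lam"
  unfolding Om1_def
proof (intro CollectI conjI ballI)
  show "(\<lambda>v. y (sJ J \<sigma> v)) \<in> tor (V1 N lam)" using y sJ_V by (auto simp: tor_def)
  fix k q assume k: "k \<in> {1..N-1}" and q: "q \<in> offd (lamsum lam k)"
  have "(k, q) \<in> AJ N lam" using k q by (simp add: AJ_def)
  from AJ_props[OF this] have "pidx J k (fst q) \<in> {1..n}" "pidx J k (snd q) \<in> {1..n}" "pidx J k (fst q) \<noteq> pidx J k (snd q)"
    by auto
  then show "y (sJ J \<sigma> (TV k (fst q))) \<noteq> y (sJ J \<sigma> (TV k (snd q)))" using inj by (auto simp: sJ_def dest: inj_onD)
qed

lemma Dl_DlJ: "Dl N lam (\<lambda>v. y (sJ J \<sigma> v)) = DlJ N lam J y"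
  unfolding Dl_def DlJ_def AJ_def
  using prod.Sigma[of "{1..N-1}" "\<lambda>k. offd (lamsum lam k)" "\<lambda>k q. y (pidx J k (fst q)) - y (pidx J k (snd q))"]
  by (simp add: sJ_def finite_offd split_beta)

lemma G1_Stot:
  assumes y: "y \<in> tor {0..n}"
  shows "G1 N lam I (\<lambda>v. y (sJ J \<sigma> v)) = E2 N lam J y * Stot N lam I J \<sigma> y"
proof -
  have "G1 N lam I (\<lambda>v. y (sJ J \<sigma> v)) = (\<Sum>\<pi>\<in>sym_perms N lam. (1 - y 0) ^ (\<Sum>k=1..N-1. lamsum lam k) * Gt N lam I \<pi> (\<lambda>v. y (sJ J \<sigma> v)))"
    unfolding G1_def by (simp add: sum_distrib_left sJ_def)
  also have "\<dots> = (\<Sum>\<pi>\<in>sym_perms N lam. E2 N lam J y * (if NV N lam I J \<sigma> \<pi> then Sp N lam I J \<sigma> \<pi> y else 0))"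
  proof (rule sum.cong[OF refl])
    fix \<pi> assume \<pi>: "\<pi> \<in> sym_perms N lam"
    show "(1 - y 0) ^ (\<Sum>k=1..N-1. lamsum lam k) * Gt N lam I \<pi> (\<lambda>v. y (sJ J \<sigma> v)) =
          E2 N lam J y * (if NV N lam I J \<sigma> \<pi> then Sp N lam I J \<sigma> \<pi> y else 0)"
      using term_factor[OF opI opJ \<sigma> \<pi> _ y] term_zero[OF opI opJ \<sigma> \<pi> _ y] by (cases "NV N lam I J \<sigma> \<pi>") auto
  qed
  finally show ?thesis unfolding Stot_def by (simp add: sum_distrib_left)
qed

lemma E2_ev:
  assumes y: "y \<in> tor {0..n}"
  shows "eventually (\<lambda>e. E2 N lam J (\<lambda>v. y v + e * (if v = 0 then 1 else 0)) \<noteq> 0) (at 0)"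
proof -
  let ?ye = "\<lambda>e v. y v + e * (if v = 0 then 1 else 0)"
  have f: "eventually (\<lambda>e. 1 - ?ye e 0 * ?ye e (pidx J k b) / ?ye e (pidx J k a) \<noteq> 0) (at 0)"
    if k: "k \<in> {1..N-1}" and a: "a \<in> {1..lamsum lam k}" and b: "b \<in> {1..lamsum lam k}" for k a b
  proof -
    have u: "pidx J k a \<in> {1..n}" and w: "pidx J k b \<in> {1..n}" using pJ_in[OF k a] pJ_in[OF k b] .
    have yu: "y (pidx J k a) \<noteq> 0" and yw: "y (pidx J k b) \<noteq> 0" using u w y by (auto simp: tor_def)
    define r where "r = y (pidx J k b) / y (pidx J k a)"
    have r0: "r \<noteq> 0" using yu yw by (simp add: r_def)
    have "eventually (\<lambda>e. (1 - y 0 * r) + e * (- r) \<noteq> 0) (at 0)" by (rule ev_affine) (use r0 in simp)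
    then show ?thesis
    proof (rule eventually_mono)
      fix e assume h: "(1 - y 0 * r) + e * (- r) \<noteq> 0"
      have e1: "?ye e (pidx J k a) = y (pidx J k a)" and e2: "?ye e (pidx J k b) = y (pidx J k b)"
        and e3: "?ye e 0 = y 0 + e"
        using u w by auto
      have "1 - ?ye e 0 * ?ye e (pidx J k b) / ?ye e (pidx J k a) = 1 - (y 0 + e) * y (pidx J k b) / y (pidx J k a)"
        by (simp only: e1 e2 e3)
      also have "\<dots> = (1 - y 0 * r) + e * (- r)" using yu by (simp add: r_def field_simps)
      finally have eqF: "1 - ?ye e 0 * ?ye e (pidx J k b) / ?ye e (pidx J k a) = (1 - y 0 * r) + e * (- r)" .
      show "1 - ?ye e 0 * ?ye e (pidx J k b) / ?ye e (pidx J k a) \<noteq> 0" unfolding eqF by (rule h)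
    qed
  qed
  have "eventually (\<lambda>e. \<forall>k\<in>{1..N-1}. \<forall>a\<in>{1..lamsum lam k}. \<forall>b\<in>{1..lamsum lam k}.
          1 - ?ye e 0 * ?ye e (pidx J k b) / ?ye e (pidx J k a) \<noteq> 0) (at 0)"
  proof (rule eventually_ball_finite[OF finite_atLeastAtMost], rule ballI)
    fix k assume k: "k \<in> {1..N-1}"
    show "eventually (\<lambda>e. \<forall>a\<in>{1..lamsum lam k}. \<forall>b\<in>{1..lamsum lam k}.
          1 - ?ye e 0 * ?ye e (pidx J k b) / ?ye e (pidx J k a) \<noteq> 0) (at 0)"
    proof (rule eventually_ball_finite[OF finite_atLeastAtMost], rule ballI)
      fix a assume a: "a \<in> {1..lamsum lam k}"
      show "eventually (\<lambda>e. \<forall>b\<in>{1..lamsum lam k}.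
          1 - ?ye e 0 * ?ye e (pidx J k b) / ?ye e (pidx J k a) \<noteq> 0) (at 0)"
        by (rule eventually_ball_finite[OF finite_atLeastAtMost], rule ballI, rule f[OF k a])
    qed
  qed
  then show ?thesis unfolding E2_def by eventually_elim simp
qed

theorem part2:
  "\<exists>Q. lau {0..n} Q \<and> (\<forall>y\<in>tor {0..n}. inj_on y {1..n} \<longrightarrow>
     W_fun N lam I (\<lambda>k a. y (pidx J k a)) (\<lambda>c. y (\<sigma> c)) (y 0) = E2 N lam J y * Q y)"
proof -
  obtain L where L: "lau (V1 N lam) L" "\<forall>x\<in>Om1 N lam. W_fun N lam I (\<lambda>k a. x (TV k a)) (\<lambda>c. x (ZV c)) (x HV) = L x"
    using part1 by blast
  define L2 where "L2 y = L (\<lambda>v. y (sJ J \<sigma> v))" for y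
  have lL2: "lau {0..n} L2" unfolding L2_def[abs_def] by (rule lau_subst[OF finite_V1 _ sJ_V L(1)]) simp
  have Wx: "W_fun N lam I (\<lambda>k a. y (pidx J k a)) (\<lambda>c. y (\<sigma> c)) (y 0) = L2 y"
    if y: "y \<in> tor {0..n}" and inj: "inj_on y {1..n}" for y
    using bspec[OF L(2) x_Om1[OF y inj]] by (simp add: L2_def sJ_def)
  define SP where "SP = {q::nat \<times> nat. fst q \<in> {1..n} \<and> snd q \<in> {1..n} \<and> fst q \<noteq> snd q}"
  have finSP: "finite SP" by (rule finite_subset[of _ "{1..n} \<times> {1..n}"]) (auto simp: SP_def)
  have SPp: "\<forall>q\<in>SP. fst q \<in> {0..n} \<and> snd q \<in> {0..n} \<and> fst q \<noteq> snd q" by (auto simp: SP_def)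
  have eq1: "\<forall>y\<in>tor {0..n}. (\<forall>q\<in>SP. y (fst q) \<noteq> y (snd q)) \<longrightarrow> E2 N lam J y * Stot N lam I J \<sigma> y = L2 y * DlJ N lam J y"
  proof (intro ballI impI)
    fix y assume y: "y \<in> tor {0..n}" and ne: "\<forall>q\<in>SP. y (fst q) \<noteq> y (snd q)"
    have inj: "inj_on y {1..n}"
    proof (rule inj_onI, rule ccontr)
      fix u w assume "u \<in> {1..n}" "w \<in> {1..n}" "y u = y w" "u \<noteq> w"
      then show False using ne by (auto simp: SP_def)
    qed
    have "E2 N lam J y * Stot N lam I J \<sigma> y = G1 N lam I (\<lambda>v. y (sJ J \<sigma> v))" using G1_Stot[OF y] by simp
    also have "\<dots> = W_fun N lam I (\<lambda>k a. y (pidx J k a)) (\<lambda>c. y (\<sigma> c)) (y 0) * Dl N lam (\<lambda>v. y (sJ J \<sigma> v))"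
      using G1_eq[OF x_Om1[OF y inj], of I] by (simp add: sJ_def)
    also have "\<dots> = L2 y * DlJ N lam J y" using Wx[OF y inj] Dl_DlJ by simp
    finally show "E2 N lam J y * Stot N lam I J \<sigma> y = L2 y * DlJ N lam J y" .
  qed
  have eq2: "\<forall>y\<in>tor {0..n}. E2 N lam J y * Stot N lam I J \<sigma> y = L2 y * DlJ N lam J y"
    by (rule lau_dense[OF finite_atLeastAtMost inj_on_id[unfolded id_def] lau_mult[OF lau_E2 lau_Stot] lau_mult[OF lL2 lau_DlJ] finSP SPp eq1])
  have AJc: "\<forall>i\<in>AJ N lam. pidx J (fst i) (fst (snd i)) \<in> {0..n} \<and> pidx J (fst i) (snd (snd i)) \<in> {0..n} \<and>
      pidx J (fst i) (fst (snd i)) \<noteq> pidx J (fst i) (snd (snd i)) \<and> pidx J (fst i) (fst (snd i)) \<noteq> 0 \<and> pidx J (fst i) (snd (snd i)) \<noteq> 0"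
    using AJ_props by fastforce
  have E2ev: "\<forall>x\<in>tor {0..n}. eventually (\<lambda>e. E2 N lam J (\<lambda>v. x v + e * (if v = 0 then 1 else 0)) \<noteq> 0) (at 0)"
    using E2_ev by blast
  note md = lau_md[OF finite_atLeastAtMost inj_on_id[unfolded id_def] finite_AJ lau_E2 AJc E2ev lau_Stot lL2]
  obtain Q where Q: "lau {0..n} Q" "\<forall>y\<in>tor {0..n}. Stot N lam I J \<sigma> y = DlJ N lam J y * Q y"
    using md eq2 unfolding DlJ_def by blast
  show ?thesis
  proof (intro exI[of _ Q] conjI ballI impI)
    show "lau {0..n} Q" by (rule Q(1))
    fix y assume y: "y \<in> tor {0..n}" and inj: "inj_on y {1..n}"
    have D0: "DlJ N lam J y \<noteq> 0"
      unfolding DlJ_def using AJ_props inj by (auto simp: finite_AJ dest: inj_onD)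
    have "DlJ N lam J y * (E2 N lam J y * Q y) = DlJ N lam J y * L2 y"
      using eq2 Q(2) y by (simp add: ac_simps)
    then have "L2 y = E2 N lam J y * Q y" using D0 by simp
    then show "W_fun N lam I (\<lambda>k a. y (pidx J k a)) (\<lambda>c. y (\<sigma> c)) (y 0) = E2 N lam J y * Q y"
      using Wx[OF y inj] by simp
  qed
qed

end


definition pm :: "nat \<Rightarrow> (nat \<Rightarrow> int) \<Rightarrow> (nat \<Rightarrow>\<^sub>0 int)" where
  "pm n e = Abs_poly_mapping (\<lambda>i. if i \<in> {0..n} then e i else 0)"

lemma lookup_pm: "Poly_Mapping.lookup (pm n e) i = (if i \<in> {0..n} then e i else 0)"
proof -
  have "finite {i. (if i \<in> {0..n} then e i else 0) \<noteq> 0}"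
    by (rule finite_subset[of _ "{0..n}"]) auto
  then show ?thesis unfolding pm_def by simp
qed

lemma keys_pm: "Poly_Mapping.keys (pm n e) \<subseteq> {0..n}"
  by (auto simp: in_keys_iff lookup_pm split: if_splits)

lemma lau_to_pm:
  assumes "lau {0..n} Q0"
  shows "\<exists>Q. laurent_vars Q n \<and> (\<forall>z h. (\<forall>i\<in>{1..n}. z i \<noteq> 0) \<longrightarrow> h \<noteq> 0 \<longrightarrow> laurent_eval Q n z h = Q0 (z(0 := h)))"
proof -
  obtain M where M: "\<forall>y\<in>tor {0..n}. Q0 y = msum {0..n} M y" using assms unfolding lau_def by blast
  define L where "L = length M"
  define P where "P = (\<Sum>i<L. Poly_Mapping.single (pm n (snd (M!i))) (fst (M!i)))"
  define S where "S = (\<lambda>i. pm n (snd (M!i))) ` {..<L}"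
  have lk: "Poly_Mapping.lookup P m = (\<Sum>i<L. if pm n (snd (M!i)) = m then fst (M!i) else 0)" for m
    unfolding P_def lookup_sum by (simp add: lookup_single when_def)
  have kS: "Poly_Mapping.keys P \<subseteq> S"
  proof
    fix m assume "m \<in> Poly_Mapping.keys P"
    then have nz: "Poly_Mapping.lookup P m \<noteq> 0" by (simp add: in_keys_iff)
    have "(\<Sum>i<L. if pm n (snd (M!i)) = m then fst (M!i) else 0) \<noteq> 0" using lk[of m] nz by (rule subst)
    from sum.not_neutral_contains_not_neutral[OF this]
    obtain i where "i \<in> {..<L}" "(if pm n (snd (M!i)) = m then fst (M!i) else 0) \<noteq> 0" by blast
    then have "i < L" "pm n (snd (M!i)) = m" by (auto split: if_splits)
    then show "m \<in> S" unfolding S_def by blast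
  qed
  have finS: "finite S" unfolding S_def by simp
  have vars: "laurent_vars P n" unfolding laurent_vars_def
  proof
    fix m assume "m \<in> Poly_Mapping.keys P"
    then have "m \<in> S" using kS by (rule subsetD[rotated])
    then obtain i where "m = pm n (snd (M!i))" unfolding S_def by (rule imageE)
    then show "Poly_Mapping.keys m \<subseteq> {0..n}" using keys_pm by simp
  qed
  have ev: "laurent_eval P n z h = Q0 (z(0 := h))" if z: "\<forall>i\<in>{1..n}. z i \<noteq> 0" and h: "h \<noteq> 0" for z h
  proof -
    let ?y = "z(0 := h)"
    have y: "?y \<in> tor {0..n}" using z h by (auto simp: tor_def)
    define mo where "mo m = h powi Poly_Mapping.lookup m 0 * (\<Prod>i\<in>{1..n}. z i powi Poly_Mapping.lookup m i)" for m
    have mo_pm: "mo (pm n e) = lmono {0..n} e ?y" for e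
    proof -
      have "{0..n} = insert 0 {1..n}" by auto
      then have "lmono {0..n} e ?y = ?y 0 powi e 0 * (\<Prod>v\<in>{1..n}. ?y v powi e v)"
        unfolding lmono_def by simp
      also have "\<dots> = mo (pm n e)" unfolding mo_def lookup_pm by (intro arg_cong2[where f="(*)"] prod.cong) auto
      finally show ?thesis by simp
    qed
    have "laurent_eval P n z h = (\<Sum>m\<in>Poly_Mapping.keys P. Poly_Mapping.lookup P m * mo m)"
      unfolding laurent_eval_def mo_def by (simp add: mult.assoc)
    also have "\<dots> = (\<Sum>m\<in>S. Poly_Mapping.lookup P m * mo m)"
      by (rule sum.mono_neutral_left[OF finS kS]) (simp add: in_keys_iff)
    also have "\<dots> = (\<Sum>m\<in>S. \<Sum>i<L. if pm n (snd (M!i)) = m then fst (M!i) * mo m else 0)"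
      unfolding lk sum_distrib_right by (intro sum.cong refl) auto
    also have "\<dots> = (\<Sum>i<L. \<Sum>m\<in>S. if pm n (snd (M!i)) = m then fst (M!i) * mo m else 0)"
      by (rule sum.swap)
    also have "\<dots> = (\<Sum>i<L. fst (M!i) * mo (pm n (snd (M!i))))"
    proof (rule sum.cong[OF refl])
      fix i assume "i \<in> {..<L}"
      then have "pm n (snd (M!i)) \<in> S" unfolding S_def by blast
      then show "(\<Sum>m\<in>S. if pm n (snd (M!i)) = m then fst (M!i) * mo m else 0) = fst (M!i) * mo (pm n (snd (M!i)))"
        by (simp only: sum.delta'[OF finS] if_True)
    qed
    also have "\<dots> = (\<Sum>i<L. fst (M!i) * lmono {0..n} (snd (M!i)) ?y)"
      unfolding mo_pm ..
    also have "\<dots> = msum {0..n} M ?y"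
      unfolding msum_def L_def sum_list_sum_nth lessThan_atLeast0 by (intro sum.cong) auto
    also have "\<dots> = Q0 ?y" using M y by simp
    finally show ?thesis .
  qed
  show ?thesis using vars ev by blast
qed

theorem lemma6p1:
  fixes N n :: nat and lam :: "nat \<Rightarrow> nat" and \<sigma> :: "nat \<Rightarrow> nat" and I J :: "nat \<Rightarrow> nat set"
  assumes "(\<Sum>k=1..N. lam k) = n"
    and "\<sigma> permutes {1..n}"
    and "ordered_partition N n lam I"
    and "ordered_partition N n lam J"
  shows "\<exists>Q. laurent_vars Q n \<and>
           (\<forall>z h. (\<forall>i\<in>{1..n}. z i \<noteq> 0) \<longrightarrow> inj_on z {1..n} \<longrightarrow> h \<noteq> 0 \<longrightarrow>
              W_sigma N lam \<sigma> I (zJ J z) z h = E_fun N lam (zJ J z) h * laurent_eval Q n z h)"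
proof -
  let ?I' = "\<lambda>k. inv \<sigma> ` I k"
  have opI: "ordered_partition N n lam ?I'" by (rule op_perm[OF assms(3,2)])
  obtain Q0 where Q0: "lau {0..n} Q0" "\<forall>y\<in>tor {0..n}. inj_on y {1..n} \<longrightarrow>
     W_fun N lam ?I' (\<lambda>k a. y (pidx J k a)) (\<lambda>c. y (\<sigma> c)) (y 0) = E2 N lam J y * Q0 y"
    using part2[OF opI assms(4,2)] by blast
  obtain Q where Q: "laurent_vars Q n" "\<forall>z h. (\<forall>i\<in>{1..n}. z i \<noteq> 0) \<longrightarrow> h \<noteq> 0 \<longrightarrow> laurent_eval Q n z h = Q0 (z(0 := h))"
    using lau_to_pm[OF Q0(1)] by blast
  show ?thesis
  proof (intro exI[of _ Q] conjI allI impI)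
    show "laurent_vars Q n" by (rule Q(1))
    fix z :: "nat \<Rightarrow> complex" and h :: complex
    assume z: "\<forall>i\<in>{1..n}. z i \<noteq> 0" and inj: "inj_on z {1..n}" and h: "h \<noteq> 0"
    let ?y = "z(0 := h)"
    have y: "?y \<in> tor {0..n}" using z h by (auto simp: tor_def)
    have yz: "?y x = z x" if "x \<in> {1..n}" for x using that by auto
    have yinj: "inj_on ?y {1..n}" using inj inj_on_cong[of "{1..n}" ?y z, OF yz] by simp
    have pJ: "pidx J k a \<in> {1..n}" if "k \<in> {1..N-1}" "a \<in> {1..lamsum lam k}" for k a
      by (rule pJ_in[OF opI assms(4,2) that])
    have "W_sigma N lam \<sigma> I (zJ J z) z h = W_fun N lam ?I' (zJ J z) (\<lambda>a. z (\<sigma> a)) h"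
      by (simp add: W_sigma_def)
    also have "\<dots> = W_fun N lam ?I' (\<lambda>k a. ?y (pidx J k a)) (\<lambda>c. ?y (\<sigma> c)) h"
    proof (rule W_cong)
      show "\<forall>k\<in>{1..N-1}. \<forall>a\<in>{1..lamsum lam k}. zJ J z k a = ?y (pidx J k a)"
      proof (intro ballI)
        fix k a assume k: "k \<in> {1..N-1}" and a: "a \<in> {1..lamsum lam k}"
        have "pidx J k a \<noteq> 0" using pJ[OF k a] by simp
        then show "zJ J z k a = ?y (pidx J k a)" by (simp add: zJ_def)
      qed
      show "\<forall>c\<in>{1..lamsum lam N}. z (\<sigma> c) = ?y (\<sigma> c)"
      proof
        fix c assume "c \<in> {1..lamsum lam N}"
        then have "c \<in> {1..n}" using lamsum_N[OF assms(4)] by simp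
        then have "\<sigma> c \<in> {1..n}" using permutes_in_image[OF assms(2), of c] by blast
        then have "\<sigma> c \<noteq> 0" by simp
        then show "z (\<sigma> c) = ?y (\<sigma> c)" by simp
      qed
    qed
    also have "\<dots> = E2 N lam J ?y * Q0 ?y"
    proof -
      have "W_fun N lam ?I' (\<lambda>k a. ?y (pidx J k a)) (\<lambda>c. ?y (\<sigma> c)) (?y 0) = E2 N lam J ?y * Q0 ?y"
        using Q0(2) y yinj by blast
      then show ?thesis by simp
    qed
    also have "E2 N lam J ?y = E_fun N lam (zJ J z) h"
      unfolding E2_def E_fun_def zJ_def
    proof (intro prod.cong refl)
      fix k a b assume k: "k \<in> {1..N-1}" and a: "a \<in> {1..lamsum lam k}" and b: "b \<in> {1..lamsum lam k}"
      show "1 - ?y 0 * ?y (pidx J k b) / ?y (pidx J k a) = 1 - h * z (pidx J k b) / z (pidx J k a)"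
        using pJ[OF k a] pJ[OF k b] by auto
    qed
    also have "Q0 ?y = laurent_eval Q n z h" using Q(2) z h by simp
    finally show "W_sigma N lam \<sigma> I (zJ J z) z h = E_fun N lam (zJ J z) h * laurent_eval Q n z h" .
  qed
qed


end
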